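(* The family $\{\eta^i_{n,m}\}_{i\geq 1,\,n,m\geq 0}$, where $\eta^i_{n,m}:=K^{-(n+m)/2}\,w_n\xi^i w_m$, is a Riesz basis of $L^2(M)\ominus L^2(C)$. Consequently every $x\in L^2(M)\ominus L^2(C)$ has a unique decomposition $x=\sum_{i\geq1,n,m\geq 0}b^i_{n,m}\eta^i_{n,m}$ with $(b^i_{n,m})\in\ell^2$.
   Context: Setup. Fix an integer $N\geq 1$, let $\Gamma=\mathbb{F}_{N+1}$ be the free group on $N+1$ generators with word length $|g|$, and set $K=2N+1$. Let $M=L(\Gamma)$ with canonical unitaries $u_g$ and trace $\tau$, so $L^2(M)=\ell^2(\Gamma)$. For $n\geq1$ put $w_n=\sum_{|g|=n}u_g$ and $w_0=1$. The radial masa is $C=\{w_1\}''\subset M$; $w_n\in C$ and $\{w_n\}_{n\ge0}$ is an orthogonal basis of $L^2(C)$. For $l\geq 0$ let $\mathcal{K}_l\subset\ell^2(\Gamma)$ be the span of the $\delta_g$ with $|g|=l$ and $Q_l$ the orthogonal projection onto $\mathcal{K}_l$. For $\xi\in\mathcal{K}_l$ and $n,m\geq 0$ put $\xi_{n,m}=K^{-(n+m)/2}Q_{l+n+m}(w_n\xi w_m)$, and $\xi_{n,m}=0$ if $n<0$ or $m<0$. Known facts (Rădulescu): $L^2(M)\ominus L^2(C)=\bigoplus_{i\geq1}\mathcal{H}_i$ (orthogonal sum of $C$-$C$-bimodules), where $\mathcal{H}_i$ is the closed $C$-$C$-bimodule generated by a unit vector $\xi^i\in\mathcal{K}_{l(i)}$,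 $l(i)\geq1$, and only finitely many $i$ have $l(i)=1$. For $l(i)\geq 2$, $\{\xi^i_{n,m}\}_{n,m\ge0}$ is an orthonormal basis of $\mathcal{H}_i$ and $w_n\xi^iw_m=K^{\frac{n+m}{2}}\xi^i_{n,m}-K^{\frac{n+m-2}{2}}(\xi^i_{n,m-2}+\xi^i_{n-2,m})+K^{\frac{n+m-4}{2}}\xi^i_{n-2,m-2}$. For $l(i)=1$ there is $\sigma=\sigma(i)\in\{\pm1\}$ with $w_n\xi^iw_m=K^{\frac{n+m}{2}}\xi^i_{n,m}-K^{\frac{n+m-2}{2}}(\xi^i_{n,m-2}+\xi^i_{n-2,m}+\sigma\xi^i_{n-1,m-1})+\sum_{k\geq2}(-\sigma)^kK^{\frac{n+m-2k}{2}}(\sigma\xi^i_{n-k-1,m-k+1}+\sigma\xi^i_{n-k+1,m-k-1}+2\xi^i_{n-k,m-k})$. For all $i,j$ the maps $T_{i,j}:\xi^i_{n,m}\mapsto\xi^j_{n,m}$ and $S_{i,j}:w_n\xi^iw_m\mapsto w_n\xi^jw_m$ extend to bounded invertible operators $\mathcal{H}_i\to\mathcal{H}_j$ with $\sup_{i,j}\|T_{i,j}^{\pm1}\|<\infty$ and $\sup_{i,j}\|S_{i,j}^{\pm1}\|<\infty$; in particular $\{\xi^i_{n,m}\}_{i\ge1,n,m\ge0}$ is a Riesz basis of $L^2(M)\ominus L^2(C)$. A family $\{v_\alpha\}$ in a separable Hilbert space is a Riesz basis if it is the image of an orthonormal basis under a bounded invertible operator; equivalently there are $0<a\le b$ with $a\sum|c_\alpha|^2\le\|\sum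 c_\alpha v_\alpha\|^2\le b\sum|c_\alpha|^2$ for all $(c_\alpha)\in\ell^2$ and the family has dense span. *)

theory Defs
  imports "HOL-Analysis.Analysis"
begin

text \<open>Free group on the N+1 generators 0..N, as reduced words. A letter (a,True) is
the generator a, (a,False) its inverse. Word length = list length.\<close>

type_synonym word = "(nat \<times> bool) list"
type_synonym vec = "word \<Rightarrow> complex"

fun reduced :: "word \<Rightarrow> bool" where
  "reduced (x # y # ys) = (\<not> (fst x = fst y \<and> snd x \<noteq> snd y) \<and> reduced (y # ys))"
| "reduced _ = True"

definition Gam :: "nat \<Rightarrow> word set" where
  "Gam N = {w. reduced w \<and> (\<forall>x\<in>set w. fst x \<le> N)}"

definition push :: "nat \<times> bool \<Rightarrow> word \<Rightarrow> word" where
  "push x ys = (case ys of [] \<Rightarrow> [x]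
     | y # ys' \<Rightarrow> (if fst y = fst x \<and> snd y \<noteq> snd x then ys' else x # ys))"

definition gmul :: "word \<Rightarrow> word \<Rightarrow> word" where
  "gmul xs ys = foldr push xs ys"

definition ginv :: "word \<Rightarrow> word" where
  "ginv xs = rev (map (\<lambda>(a, b). (a, \<not> b)) xs)"

definition sphere :: "nat \<Rightarrow> nat \<Rightarrow> word set" where
  "sphere N n = {g \<in> Gam N. length g = n}"

definition Kc :: "nat \<Rightarrow> real" where
  "Kc N = 2 * real N + 1"

definition kp :: "nat \<Rightarrow> real \<Rightarrow> complex" where
  "kp N r = complex_of_real (Kc N powr r)"

definition L2 :: "nat \<Rightarrow> vec set" where
  "L2 N = {f. (\<forall>g. g \<notin> Gam N \<longrightarrow> f g = 0) \<and> (\<lambda>g. (cmod (f g))^2) summable_on UNIV}"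

definition ip :: "vec \<Rightarrow> vec \<Rightarrow> complex" where
  "ip f h = infsum (\<lambda>g. f g * cnj (h g)) UNIV"

definition nrm :: "vec \<Rightarrow> real" where
  "nrm f = sqrt (infsum (\<lambda>g. (cmod (f g))^2) UNIV)"

text \<open>w_n as a vector (indicator of the sphere of radius n), and the vector w_n xi w_m:
 (u_a xi u_b)(g) = xi(a^-1 g b^-1).\<close>

definition wv :: "nat \<Rightarrow> nat \<Rightarrow> vec" where
  "wv N n = (\<lambda>g. if g \<in> sphere N n then 1 else 0)"

definition bimul :: "nat \<Rightarrow> nat \<Rightarrow> vec \<Rightarrow> nat \<Rightarrow> vec" where
  "bimul N n \<xi> m = (\<lambda>g. if g \<in> Gam N then
      (\<Sum>a\<in>sphere N n. \<Sum>b\<in>sphere N m. \<xi> (gmul (ginv a) (gmul g (ginv b)))) else 0)"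

definition Qp :: "nat \<Rightarrow> vec \<Rightarrow> vec" where
  "Qp l f = (\<lambda>g. if length g = l then f g else 0)"

definition xinm :: "nat \<Rightarrow> nat \<Rightarrow> vec \<Rightarrow> int \<Rightarrow> int \<Rightarrow> vec" where
  "xinm N l \<xi> n m = (if n < 0 \<or> m < 0 then (\<lambda>_. 0) else
     (\<lambda>g. kp N (- real_of_int (n + m) / 2) * Qp (l + nat (n + m)) (bimul N (nat n) \<xi> (nat m)) g))"

definition lincomb :: "vec set \<Rightarrow> vec set" where
  "lincomb S = {h. \<exists>F c. finite F \<and> F \<subseteq> S \<and> h = (\<lambda>g. \<Sum>v\<in>F. c v * v g)}"

definition cspan :: "nat \<Rightarrow> vec set \<Rightarrow> vec set" where
  "cspan N S = {f \<in> L2 N. \<forall>e>0. \<exists>h\<in>lincomb S. nrm (\<lambda>g. f g - h g) < e}"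

definition L2C :: "nat \<Rightarrow> vec set" where
  "L2C N = cspan N (range (wv N))"

definition ocompl :: "nat \<Rightarrow> vec set" where
  "ocompl N = {f \<in> L2 N. \<forall>h\<in>L2C N. ip f h = 0}"

text \<open>Closed C-C-bimodule generated by xi: closed span of the w_n xi w_m.\<close>

definition Hmod :: "nat \<Rightarrow> vec \<Rightarrow> vec set" where
  "Hmod N \<xi> = cspan N {bimul N n \<xi> m | n m. True}"

definition has_sum_l2 :: "nat \<Rightarrow> ('i \<Rightarrow> vec) \<Rightarrow> 'i set \<Rightarrow> vec \<Rightarrow> bool" where
  "has_sum_l2 N v I x \<longleftrightarrow> x \<in> L2 N \<and>
     (\<forall>e>0. \<exists>F0. finite F0 \<and> F0 \<subseteq> I \<and>
        (\<forall>F. finite F \<and> F0 \<subseteq> F \<and> F \<subseteq> I \<longrightarrow> nrm (\<lambda>g. x g - (\<Sum>\<alpha>\<in>F. v \<alpha> g)) < e))"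

definition sq_summable :: "('i \<Rightarrow> complex) \<Rightarrow> 'i set \<Rightarrow> bool" where
  "sq_summable c I \<longleftrightarrow> (\<lambda>\<alpha>. (cmod (c \<alpha>))^2) summable_on I"

definition riesz_basis :: "nat \<Rightarrow> ('i \<Rightarrow> vec) \<Rightarrow> 'i set \<Rightarrow> vec set \<Rightarrow> bool" where
  "riesz_basis N v I H \<longleftrightarrow> (\<forall>\<alpha>\<in>I. v \<alpha> \<in> H) \<and> cspan N (v ` I) = H \<and>
     (\<exists>a b. 0 < a \<and> a \<le> b \<and>
       (\<forall>c. sq_summable c I \<longrightarrow>
          (\<exists>x. has_sum_l2 N (\<lambda>\<alpha> g. c \<alpha> * v \<alpha> g) I x \<and>
               a * infsum (\<lambda>\<alpha>. (cmod (c \<alpha>))^2) I \<le> (nrm x)^2 \<and>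
               (nrm x)^2 \<le> b * infsum (\<lambda>\<alpha>. (cmod (c \<alpha>))^2) I)))"

definition orthonormal_basis :: "nat \<Rightarrow> ('i \<Rightarrow> vec) \<Rightarrow> vec set \<Rightarrow> bool" where
  "orthonormal_basis N v H \<longleftrightarrow> (\<forall>\<alpha>. v \<alpha> \<in> L2 N) \<and>
     (\<forall>\<alpha> \<beta>. ip (v \<alpha>) (v \<beta>) = (if \<alpha> = \<beta> then 1 else 0)) \<and> cspan N (range v) = H"

definition eta :: "nat \<Rightarrow> vec \<Rightarrow> nat \<Rightarrow> nat \<Rightarrow> vec" where
  "eta N \<xi> n m = (\<lambda>g. kp N (- (real n + real m) / 2) * bimul N n \<xi> m g)"

end

theory Submission
  imports Defs "HOL-Analysis.Analysis"
begin

definition sqs :: "('a \<Rightarrow> complex) \<Rightarrow> bool" where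
  "sqs f \<longleftrightarrow> (\<lambda>x. (cmod (f x))^2) summable_on UNIV"
definition sqn :: "('a \<Rightarrow> complex) \<Rightarrow> real" where
  "sqn f = infsum (\<lambda>x. (cmod (f x))^2) UNIV"
definition l2n :: "('a \<Rightarrow> complex) \<Rightarrow> real" where
  "l2n f = sqrt (sqn f)"
definition ipg :: "('a \<Rightarrow> complex) \<Rightarrow> ('a \<Rightarrow> complex) \<Rightarrow> complex" where
  "ipg f h = infsum (\<lambda>x. f x * cnj (h x)) UNIV"

lemma sqn_nonneg: "0 \<le> sqn f" unfolding sqn_def by (rule infsum_nonneg) simp
lemma l2n_nonneg: "0 \<le> l2n f" by (simp add: l2n_def sqn_nonneg)
lemma l2n_sq: "(l2n f)^2 = sqn f" by (simp add: l2n_def sqn_nonneg)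

lemma bdd_sqs:
  assumes "\<And>E. finite E \<Longrightarrow> (\<Sum>x\<in>E. (cmod (f x))^2) \<le> C"
  shows "sqs f" "sqn f \<le> C"
proof -
  show s: "sqs f" unfolding sqs_def
    by (rule nonneg_bdd_above_summable_on) (auto intro!: bdd_aboveI[of _ C] assms)
  show "sqn f \<le> C" unfolding sqn_def
    by (rule infsum_le_finite_sums) (use s assms in \<open>auto simp: sqs_def\<close>)
qed

lemma sum_le_sqn: "sqs f \<Longrightarrow> finite E \<Longrightarrow> (\<Sum>x\<in>E. (cmod (f x))^2) \<le> sqn f"
  unfolding sqs_def sqn_def by (rule finite_sum_le_infsum) auto

lemma fin_sqs:
  assumes "finite S" "\<And>x. x \<notin> S \<Longrightarrow> f x = 0"
  shows "sqs f" "sqn f = (\<Sum>x\<in>S. (cmod (f x))^2)"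
proof -
  have b: "(\<Sum>x\<in>E. (cmod (f x))^2) \<le> (\<Sum>x\<in>S. (cmod (f x))^2)" if "finite E" for E
  proof -
    have "(\<Sum>x\<in>E. (cmod (f x))^2) = (\<Sum>x\<in>E \<inter> S. (cmod (f x))^2)"
      using that assms by (intro sum.mono_neutral_right) auto
    also have "\<dots> \<le> (\<Sum>x\<in>S. (cmod (f x))^2)"
      using assms by (intro sum_mono2) auto
    finally show ?thesis .
  qed
  show s: "sqs f" by (rule bdd_sqs(1)[OF b])
  show "sqn f = (\<Sum>x\<in>S. (cmod (f x))^2)"
    using bdd_sqs(2)[OF b] sum_le_sqn[OF s assms(1)] by linarith
qed

lemma sqs_scale: "sqs f \<Longrightarrow> sqs (\<lambda>x. c * f x)"
  unfolding sqs_def by (simp add: norm_mult power_mult_distrib summable_on_cmult_right)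

lemma sqn_scale: "sqs f \<Longrightarrow> sqn (\<lambda>x. c * f x) = (cmod c)^2 * sqn f"
  unfolding sqs_def sqn_def by (simp add: norm_mult power_mult_distrib infsum_cmult_right)

lemma l2n_scale: "sqs f \<Longrightarrow> l2n (\<lambda>x. c * f x) = cmod c * l2n f"
  by (simp add: l2n_def sqn_scale real_sqrt_mult)

lemma sqs_add: assumes "sqs f" "sqs h" shows "sqs (\<lambda>x. f x + h x)"
proof -
  have "(\<lambda>x. 2 * (cmod (f x))^2 + 2 * (cmod (h x))^2) summable_on UNIV"
    using assms unfolding sqs_def by (intro summable_on_add summable_on_cmult_right)
  moreover have "(cmod (f x + h x))^2 \<le> 2 * (cmod (f x))^2 + 2 * (cmod (h x))^2" for x
  proof -
    have "cmod (f x + h x) \<le> cmod (f x) + cmod (h x)" by (rule norm_triangle_ineq)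
    hence "(cmod (f x + h x))^2 \<le> (cmod (f x) + cmod (h x))^2"
      by (simp add: power_mono)
    also have "\<dots> \<le> 2 * (cmod (f x))^2 + 2 * (cmod (h x))^2"
    proof -
      have "0 \<le> (cmod (f x) - cmod (h x))^2" by simp
      thus ?thesis by (simp add: power2_sum power2_diff)
    qed
    finally show ?thesis .
  qed
  ultimately show ?thesis unfolding sqs_def
    by (rule summable_on_comparison_test) auto
qed

lemma sqs_minus: "sqs f \<Longrightarrow> sqs (\<lambda>x. - f x)"
  unfolding sqs_def by simp

lemma sqs_diff: "sqs f \<Longrightarrow> sqs h \<Longrightarrow> sqs (\<lambda>x. f x - h x)"
  using sqs_add[of f "\<lambda>x. - h x"] sqs_minus[of h] by simp

lemma sqs_zero: "sqs (\<lambda>x. 0)" unfolding sqs_def by simp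

lemma sqs_sum: "finite J \<Longrightarrow> (\<And>j. j \<in> J \<Longrightarrow> sqs (F j)) \<Longrightarrow> sqs (\<lambda>x. \<Sum>j\<in>J. F j x)"
  by (induction J rule: finite_induct) (auto intro: sqs_add sqs_zero)

lemma point_le: "sqs f \<Longrightarrow> cmod (f x) \<le> l2n f"
proof -
  assume "sqs f"
  from sum_le_sqn[OF this, of "{x}"] have "(cmod (f x))^2 \<le> sqn f" by simp
  thus ?thesis unfolding l2n_def by (simp add: real_le_rsqrt)
qed

lemma L2_set_le_l2n: "sqs f \<Longrightarrow> finite E \<Longrightarrow> L2_set (\<lambda>x. cmod (f x)) E \<le> l2n f"
  unfolding L2_set_def l2n_def using sum_le_sqn by (simp add: real_sqrt_le_iff)

lemma l2n_triangle:
  assumes "sqs f" "sqs h" shows "l2n (\<lambda>x. f x + h x) \<le> l2n f + l2n h"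
proof -
  have b: "(\<Sum>x\<in>E. (cmod (f x + h x))^2) \<le> (l2n f + l2n h)^2" if "finite E" for E
  proof -
    have eq: "(\<Sum>x\<in>E. (cmod (f x + h x))^2) = (L2_set (\<lambda>x. cmod (f x + h x)) E)^2"
      by (simp add: L2_set_def sum_nonneg)
    have "L2_set (\<lambda>x. cmod (f x + h x)) E \<le> L2_set (\<lambda>x. cmod (f x) + cmod (h x)) E"
      by (rule L2_set_mono) (auto intro: norm_triangle_ineq)
    also have "\<dots> \<le> L2_set (\<lambda>x. cmod (f x)) E + L2_set (\<lambda>x. cmod (h x)) E"
      by (rule L2_set_triangle_ineq)
    also have "\<dots> \<le> l2n f + l2n h"
      using L2_set_le_l2n[OF assms(1) that] L2_set_le_l2n[OF assms(2) that] by linarith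
    finally have "L2_set (\<lambda>x. cmod (f x + h x)) E \<le> l2n f + l2n h" .
    thus ?thesis unfolding eq by (simp add: power_mono)
  qed
  have "sqn (\<lambda>x. f x + h x) \<le> (l2n f + l2n h)^2" by (rule bdd_sqs(2)[OF b])
  thus ?thesis unfolding l2n_def[of "\<lambda>x. f x + h x"]
    using l2n_nonneg[of f] l2n_nonneg[of h] by (simp add: real_sqrt_le_iff real_le_lsqrt)
qed

lemma l2n_mono:
  assumes "\<And>x. cmod (f x) \<le> cmod (h x)" "sqs h"
  shows "sqs f" "l2n f \<le> l2n h"
proof -
  have b: "(\<Sum>x\<in>E. (cmod (f x))^2) \<le> sqn h" if "finite E" for E
  proof -
    have "(\<Sum>x\<in>E. (cmod (f x))^2) \<le> (\<Sum>x\<in>E. (cmod (h x))^2)"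
      by (rule sum_mono) (simp add: assms(1) power_mono)
    thus ?thesis using sum_le_sqn[OF assms(2) that] by linarith
  qed
  show "sqs f" by (rule bdd_sqs(1)[OF b])
  show "l2n f \<le> l2n h" using bdd_sqs(2)[OF b] by (simp add: l2n_def)
qed

lemma l2n_inj:
  assumes "inj h" "sqs f"
  shows "sqs (\<lambda>x. f (h x))" "l2n (\<lambda>x. f (h x)) \<le> l2n f"
proof -
  have b: "(\<Sum>x\<in>E. (cmod (f (h x)))^2) \<le> sqn f" if "finite E" for E
  proof -
    have "(\<Sum>x\<in>E. (cmod (f (h x)))^2) = (\<Sum>y\<in>h ` E. (cmod (f y))^2)"
      using assms(1) by (simp add: sum.reindex inj_on_def inj_def)
    also have "\<dots> \<le> sqn f" using sum_le_sqn[OF assms(2)] that by auto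
    finally show ?thesis .
  qed
  show "sqs (\<lambda>x. f (h x))" by (rule bdd_sqs(1)[OF b])
  show "l2n (\<lambda>x. f (h x)) \<le> l2n f" using bdd_sqs(2)[OF b] by (simp add: l2n_def)
qed

lemma l2n_minus: "l2n (\<lambda>x. - f x) = l2n f" by (simp add: l2n_def sqn_def)

lemma l2n_diff_comm: "l2n (\<lambda>x. f x - h x) = l2n (\<lambda>x. h x - f x)"
  using l2n_minus[of "\<lambda>x. h x - f x"] by simp

lemma l2n_diff_triangle:
  assumes "sqs f" "sqs h" "sqs k"
  shows "l2n (\<lambda>x. f x - k x) \<le> l2n (\<lambda>x. f x - h x) + l2n (\<lambda>x. h x - k x)"
  using l2n_triangle[OF sqs_diff[OF assms(1,2)] sqs_diff[OF assms(2,3)]] by simp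

lemma l2n_zero_iff: "sqs f \<Longrightarrow> l2n f = 0 \<Longrightarrow> f x = 0"
  using point_le[of f x] by simp

lemma ab_le: "0 \<le> (a::real) \<Longrightarrow> 0 \<le> b \<Longrightarrow> a * b \<le> a^2 + b^2"
proof -
  assume "0 \<le> a" "0 \<le> b"
  have "0 \<le> (a - b)^2" by simp
  thus ?thesis using mult_nonneg_nonneg[OF \<open>0 \<le> a\<close> \<open>0 \<le> b\<close>]
    by (simp add: power2_eq_square algebra_simps)
qed

lemma ipg_summable:
  assumes "sqs f" "sqs h" shows "(\<lambda>x. f x * cnj (h x)) summable_on UNIV"
proof (rule abs_summable_summable)
  have "(\<lambda>x. (cmod (f x))^2 + (cmod (h x))^2) summable_on UNIV"
    using assms unfolding sqs_def by (rule summable_on_add)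
  moreover have "norm (f x * cnj (h x)) \<le> (cmod (f x))^2 + (cmod (h x))^2" for x
  proof -
    have "cmod (f x) * cmod (h x) \<le> (cmod (f x))^2 + (cmod (h x))^2"
      by (rule ab_le) auto
    thus ?thesis by (simp add: norm_mult)
  qed
  ultimately show "(\<lambda>x. norm (f x * cnj (h x))) summable_on UNIV"
    by (rule summable_on_comparison_test) auto
qed

lemma ipg_self: "sqs f \<Longrightarrow> ipg f f = of_real (sqn f)"
proof -
  assume "sqs f"
  have "ipg f f = infsum (\<lambda>x. of_real ((cmod (f x))^2)) UNIV"
    unfolding ipg_def by (simp only: complex_norm_square)
  also have "\<dots> = of_real (sqn f)"
    unfolding sqn_def
    by (rule infsumI, rule has_sum_of_real) (use \<open>sqs f\<close> in \<open>simp add: sqs_def\<close>)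
  finally show ?thesis .
qed

lemma cmod_add_sq: "(cmod (a + b))^2 = (cmod a)^2 + (cmod b)^2 + 2 * Re (a * cnj b)"
  by (simp only: cmod_power2) (simp add: power2_eq_square algebra_simps)

lemma sqn_add:
  assumes "sqs f" "sqs h"
  shows "sqn (\<lambda>x. f x + h x) = sqn f + sqn h + 2 * Re (ipg f h)"
proof -
  have s: "(\<lambda>x. f x * cnj (h x)) summable_on UNIV" by (rule ipg_summable[OF assms])
  have "sqn (\<lambda>x. f x + h x) = infsum (\<lambda>x. ((cmod (f x))^2 + (cmod (h x))^2) + 2 * Re (f x * cnj (h x))) UNIV"
    unfolding sqn_def by (simp add: cmod_add_sq)
  also have "\<dots> = infsum (\<lambda>x. (cmod (f x))^2 + (cmod (h x))^2) UNIV + infsum (\<lambda>x. 2 * Re (f x * cnj (h x))) UNIV"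
  proof -
    have sR: "(\<lambda>x. Re (f x * cnj (h x))) summable_on UNIV" by (rule summable_on_Re[OF s])
    have a1: "(\<lambda>x. (cmod (f x))^2 + (cmod (h x))^2) summable_on UNIV"
      using assms unfolding sqs_def by (rule summable_on_add)
    have a2: "(\<lambda>x. 2 * Re (f x * cnj (h x))) summable_on UNIV" by (rule summable_on_cmult_right[OF sR])
    show ?thesis by (rule infsum_add[OF a1 a2])
  qed
  also have "infsum (\<lambda>x. (cmod (f x))^2 + (cmod (h x))^2) UNIV = sqn f + sqn h"
    unfolding sqn_def by (rule infsum_add) (use assms in \<open>auto simp: sqs_def\<close>)
  also have "infsum (\<lambda>x. 2 * Re (f x * cnj (h x))) UNIV = 2 * Re (ipg f h)"
    unfolding ipg_def using s by (simp only: infsum_cmult_right summable_on_Re infsum_Re)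
  finally show ?thesis .
qed

lemma ipg_add_right:
  assumes "sqs f" "sqs h" "sqs k"
  shows "ipg f (\<lambda>x. h x + k x) = ipg f h + ipg f k"
  unfolding ipg_def using ipg_summable[OF assms(1,2)] ipg_summable[OF assms(1,3)]
  by (simp add: distrib_left infsum_add)

lemma ipg_zero_right: "ipg f (\<lambda>x. 0) = 0" by (simp add: ipg_def)

lemma ipg_sum_right:
  assumes "finite J" "sqs f" "\<And>j. j \<in> J \<Longrightarrow> sqs (F j)"
  shows "ipg f (\<lambda>x. \<Sum>j\<in>J. F j x) = (\<Sum>j\<in>J. ipg f (F j))"
  using assms
proof (induction J rule: finite_induct)
  case empty thus ?case by (simp add: ipg_zero_right)
next
  case (insert a J)
  have "ipg f (\<lambda>x. \<Sum>j\<in>insert a J. F j x) = ipg f (\<lambda>x. F a x + (\<Sum>j\<in>J. F j x))"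
    using insert by simp
  also have "\<dots> = ipg f (F a) + ipg f (\<lambda>x. \<Sum>j\<in>J. F j x)"
    using insert by (intro ipg_add_right) (auto intro!: sqs_sum)
  finally show ?case using insert by simp
qed

lemma ipg_scale_left: "ipg (\<lambda>x. c * f x) h = c * ipg f h"
  unfolding ipg_def by (simp add: mult.assoc infsum_cmult_right')

lemma ipg_scale_right: "ipg f (\<lambda>x. c * h x) = cnj c * ipg f h"
  unfolding ipg_def by (simp add: mult.left_commute infsum_cmult_right')

lemma pyth:
  assumes "finite J" "\<And>j. j \<in> J \<Longrightarrow> sqs (F j)"
    "\<And>j k. j \<in> J \<Longrightarrow> k \<in> J \<Longrightarrow> j \<noteq> k \<Longrightarrow> ipg (F j) (F k) = 0"
  shows "sqn (\<lambda>x. \<Sum>j\<in>J. F j x) = (\<Sum>j\<in>J. sqn (F j))"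
  using assms
proof (induction J rule: finite_induct)
  case empty thus ?case by (simp add: sqn_def)
next
  case (insert a J)
  have s: "sqs (\<lambda>x. \<Sum>j\<in>J. F j x)" using insert by (intro sqs_sum) auto
  have "ipg (F a) (\<lambda>x. \<Sum>j\<in>J. F j x) = (\<Sum>j\<in>J. ipg (F a) (F j))"
    using insert by (intro ipg_sum_right) auto
  also have "\<dots> = 0" using insert by (intro sum.neutral) auto
  finally have z: "ipg (F a) (\<lambda>x. \<Sum>j\<in>J. F j x) = 0" .
  have "sqn (\<lambda>x. \<Sum>j\<in>insert a J. F j x) = sqn (\<lambda>x. F a x + (\<Sum>j\<in>J. F j x))"
    using insert by simp
  also have "\<dots> = sqn (F a) + sqn (\<lambda>x. \<Sum>j\<in>J. F j x)"
    using sqn_add[OF _ s, of "F a"] insert z by simp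
  finally show ?case using insert by simp
qed

lemma orthonormal_sqn:
  assumes "finite S" "\<And>p. p \<in> S \<Longrightarrow> sqs (X p)"
    "\<And>p q. p \<in> S \<Longrightarrow> q \<in> S \<Longrightarrow> ipg (X p) (X q) = (if p = q then 1 else 0)"
  shows "sqn (\<lambda>x. \<Sum>p\<in>S. c p * X p x) = (\<Sum>p\<in>S. (cmod (c p))^2)"
proof -
  have "sqn (\<lambda>x. \<Sum>p\<in>S. c p * X p x) = (\<Sum>p\<in>S. sqn (\<lambda>x. c p * X p x))"
    by (rule pyth) (use assms in \<open>auto intro: sqs_scale simp: ipg_scale_left ipg_scale_right\<close>)
  also have "\<dots> = (\<Sum>p\<in>S. (cmod (c p))^2)"
  proof (rule sum.cong)
    fix p assume p: "p \<in> S"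
    have "of_real (sqn (X p)) = (1::complex)" using ipg_self[OF assms(2)[OF p]] assms(3)[OF p p] by simp
    hence "sqn (X p) = 1" by (metis of_real_eq_1_iff)
    thus "sqn (\<lambda>x. c p * X p x) = (cmod (c p))^2" using sqn_scale[OF assms(2)[OF p]] by simp
  qed simp
  finally show ?thesis .
qed

lemma l2_complete:
  fixes f :: "nat \<Rightarrow> 'a \<Rightarrow> complex"
  assumes sq: "\<And>k. sqs (f k)"
    and C: "\<And>e. e > 0 \<Longrightarrow> \<exists>K. \<forall>j\<ge>K. \<forall>k\<ge>K. l2n (\<lambda>x. f j x - f k x) < e"
  shows "\<exists>y. sqs y \<and> (\<forall>x. (\<lambda>k. f k x) \<longlonglongrightarrow> y x) \<and>
             (\<forall>e>0. \<exists>K. \<forall>k\<ge>K. l2n (\<lambda>x. y x - f k x) \<le> e)"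
proof -
  have cau: "Cauchy (\<lambda>k. f k x)" for x
  proof (rule CauchyI)
    fix e :: real assume "e > 0"
    then obtain K where K: "\<forall>j\<ge>K. \<forall>k\<ge>K. l2n (\<lambda>x. f j x - f k x) < e" using C by blast
    show "\<exists>M. \<forall>m\<ge>M. \<forall>n\<ge>M. norm (f m x - f n x) < e"
      using K point_le[OF sqs_diff[OF sq sq]] by (meson le_less_trans)
  qed
  define y where "y x = lim (\<lambda>k. f k x)" for x
  have lim: "(\<lambda>k. f k x) \<longlonglongrightarrow> y x" for x
    unfolding y_def using cau Cauchy_convergent convergent_LIMSEQ_iff by blast
  have bnd: "\<exists>K. \<forall>k\<ge>K. sqs (\<lambda>x. y x - f k x) \<and> l2n (\<lambda>x. y x - f k x) \<le> e" if "e > 0" for e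
  proof -
    obtain K where K: "\<forall>j\<ge>K. \<forall>k\<ge>K. l2n (\<lambda>x. f j x - f k x) < e" using C \<open>e > 0\<close> by blast
    have "sqs (\<lambda>x. y x - f k x) \<and> l2n (\<lambda>x. y x - f k x) \<le> e" if k: "k \<ge> K" for k
    proof -
      have b: "(\<Sum>x\<in>E. (cmod (y x - f k x))^2) \<le> e^2" if E: "finite E" for E
      proof -
        have t: "(\<lambda>j. \<Sum>x\<in>E. (cmod (f j x - f k x))^2) \<longlonglongrightarrow> (\<Sum>x\<in>E. (cmod (y x - f k x))^2)"
          by (intro tendsto_intros lim)
        have "eventually (\<lambda>j. (\<Sum>x\<in>E. (cmod (f j x - f k x))^2) \<le> e^2) sequentially"
        proof (rule eventually_sequentiallyI[of K])
          fix j assume "j \<ge> K"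
          have "(\<Sum>x\<in>E. (cmod (f j x - f k x))^2) \<le> sqn (\<lambda>x. f j x - f k x)"
            by (rule sum_le_sqn[OF sqs_diff[OF sq sq] E])
          also have "\<dots> = (l2n (\<lambda>x. f j x - f k x))^2" by (simp add: l2n_sq)
          also have "\<dots> \<le> e^2" using K \<open>j \<ge> K\<close> k
            by (intro power_mono) (auto simp: l2n_nonneg less_imp_le)
          finally show "(\<Sum>x\<in>E. (cmod (f j x - f k x))^2) \<le> e^2" .
        qed
        thus ?thesis using t by (intro tendsto_le[OF _ tendsto_const t]) auto
      qed
      have s: "sqs (\<lambda>x. y x - f k x)" by (rule bdd_sqs(1)[OF b])
      have "sqn (\<lambda>x. y x - f k x) \<le> e^2" by (rule bdd_sqs(2)[OF b])
      hence "l2n (\<lambda>x. y x - f k x) \<le> e" unfolding l2n_def using \<open>e > 0\<close>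
        by (simp add: real_sqrt_le_iff real_le_lsqrt)
      with s show ?thesis by blast
    qed
    thus ?thesis by blast
  qed
  obtain K where "\<forall>k\<ge>K. sqs (\<lambda>x. y x - f k x) \<and> l2n (\<lambda>x. y x - f k x) \<le> 1"
    using bnd[of 1] by auto
  hence "sqs (\<lambda>x. (y x - f K x) + f K x)" by (intro sqs_add sq) auto
  hence "sqs y" by simp
  thus ?thesis using lim bnd by blast
qed

lemma nrm_eq: "nrm f = l2n f" by (simp add: nrm_def l2n_def sqn_def)
lemma ip_eq: "ip f h = ipg f h" by (simp add: ip_def ipg_def)
lemma L2_iff: "f \<in> L2 N \<longleftrightarrow> (\<forall>g. g \<notin> Gam N \<longrightarrow> f g = 0) \<and> sqs f"
  by (simp add: L2_def sqs_def)

lemma L2_sqs: "f \<in> L2 N \<Longrightarrow> sqs f" by (simp add: L2_iff)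

lemma L2_add: "f \<in> L2 N \<Longrightarrow> h \<in> L2 N \<Longrightarrow> (\<lambda>g. f g + h g) \<in> L2 N"
  by (simp add: L2_iff sqs_add)
lemma L2_diff: "f \<in> L2 N \<Longrightarrow> h \<in> L2 N \<Longrightarrow> (\<lambda>g. f g - h g) \<in> L2 N"
  by (simp add: L2_iff sqs_diff)
lemma L2_scale: "f \<in> L2 N \<Longrightarrow> (\<lambda>g. c * f g) \<in> L2 N"
  by (simp add: L2_iff sqs_scale)
lemma L2_zero: "(\<lambda>g. 0) \<in> L2 N"
  by (simp add: L2_iff sqs_zero)
lemma L2_sum: "finite K \<Longrightarrow> (\<And>k. k \<in> K \<Longrightarrow> F k \<in> L2 N) \<Longrightarrow> (\<lambda>g. \<Sum>k\<in>K. F k g) \<in> L2 N"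
  by (induction K rule: finite_induct) (auto intro: L2_add L2_zero)

lemma finite_Gam_len: "finite {g \<in> Gam N. length g = L}"
proof -
  have "{g \<in> Gam N. length g = L} \<subseteq> {xs. set xs \<subseteq> {0..N} \<times> UNIV \<and> length xs = L}"
    by (auto simp: Gam_def)
  moreover have "finite {xs. set xs \<subseteq> ({0..N} \<times> (UNIV::bool set)) \<and> length xs = L}"
    by (rule finite_lists_length_eq) simp
  ultimately show ?thesis by (rule finite_subset)
qed

lemma Qp_L2: "(\<And>g. g \<notin> Gam N \<Longrightarrow> f g = 0) \<Longrightarrow> Qp L f \<in> L2 N"
  unfolding L2_iff
proof
  assume z: "\<And>g. g \<notin> Gam N \<Longrightarrow> f g = 0"
  show "\<forall>g. g \<notin> Gam N \<longrightarrow> Qp L f g = 0" using z by (simp add: Qp_def)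
  show "sqs (Qp L f)"
    by (rule fin_sqs(1)[OF finite_Gam_len[of N L]]) (use z in \<open>auto simp: Qp_def\<close>)
qed

lemma xinm_L2: "xinm N l \<xi> n m \<in> L2 N"
  unfolding xinm_def
  by (auto intro!: L2_scale[of "Qp _ _"] Qp_L2 L2_zero simp: bimul_def)

lemma eta_L2: "bimul N n \<xi> m \<in> L2 N \<Longrightarrow> eta N \<xi> n m \<in> L2 N"
  unfolding eta_def by (rule L2_scale)

lemma lincomb_zero: "(\<lambda>g. 0) \<in> lincomb T"
  unfolding lincomb_def by (rule CollectI, rule exI[of _ "{}"]) auto

lemma lincomb_mem: "v \<in> T \<Longrightarrow> v \<in> lincomb T"
  unfolding lincomb_def by (rule CollectI, rule exI[of _ "{v}"], rule exI[of _ "\<lambda>_. 1"]) auto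

lemma lincomb_scale: "h \<in> lincomb T \<Longrightarrow> (\<lambda>g. a * h g) \<in> lincomb T"
  unfolding lincomb_def
proof (elim CollectE exE conjE, intro CollectI)
  fix F c assume "finite F" "F \<subseteq> T" "h = (\<lambda>g. \<Sum>v\<in>F. c v * v g)"
  thus "\<exists>F c. finite F \<and> F \<subseteq> T \<and> (\<lambda>g. a * h g) = (\<lambda>g. \<Sum>v\<in>F. c v * v g)"
    by (intro exI[of _ F] exI[of _ "\<lambda>v. a * c v"]) (auto simp: sum_distrib_left mult.assoc)
qed

lemma lincomb_add: "h1 \<in> lincomb T \<Longrightarrow> h2 \<in> lincomb T \<Longrightarrow> (\<lambda>g. h1 g + h2 g) \<in> lincomb T"
  unfolding lincomb_def
proof (elim CollectE exE conjE, intro CollectI)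
  fix F1 c1 F2 c2 assume a: "finite F1" "F1 \<subseteq> T" "h1 = (\<lambda>g. \<Sum>v\<in>F1. c1 v * v g)"
    "finite F2" "F2 \<subseteq> T" "h2 = (\<lambda>g. \<Sum>v\<in>F2. c2 v * v g)"
  define c where "c v = (if v \<in> F1 then c1 v else 0) + (if v \<in> F2 then c2 v else 0)" for v
  have "(\<lambda>g. h1 g + h2 g) = (\<lambda>g. \<Sum>v\<in>F1 \<union> F2. c v * v g)"
  proof
    fix g
    have e1: "(\<Sum>v\<in>F1. c1 v * v g) = (\<Sum>v\<in>F1 \<union> F2. (if v \<in> F1 then c1 v else 0) * v g)"
      using a by (intro sum.mono_neutral_cong_left) auto
    have e2: "(\<Sum>v\<in>F2. c2 v * v g) = (\<Sum>v\<in>F1 \<union> F2. (if v \<in> F2 then c2 v else 0) * v g)"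
      using a by (intro sum.mono_neutral_cong_left) auto
    show "h1 g + h2 g = (\<Sum>v\<in>F1 \<union> F2. c v * v g)"
      using a e1 e2 by (simp add: c_def distrib_right sum.distrib)
  qed
  thus "\<exists>F c. finite F \<and> F \<subseteq> T \<and> (\<lambda>g. h1 g + h2 g) = (\<lambda>g. \<Sum>v\<in>F. c v * v g)"
    using a by blast
qed

lemma lincomb_sum:
  "finite A \<Longrightarrow> (\<And>a. a \<in> A \<Longrightarrow> u a \<in> lincomb T) \<Longrightarrow> (\<lambda>g. \<Sum>a\<in>A. c a * u a g) \<in> lincomb T"
proof (induction A rule: finite_induct)
  case empty thus ?case by (simp add: lincomb_zero)
next
  case (insert a A)
  have "(\<lambda>g. c a * u a g + (\<Sum>a\<in>A. c a * u a g)) \<in> lincomb T"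
    using insert by (intro lincomb_add lincomb_scale) auto
  thus ?case using insert by simp
qed

lemma lincomb_mono: "T \<subseteq> T' \<Longrightarrow> lincomb T \<subseteq> lincomb T'"
  unfolding lincomb_def by blast

lemma lincomb_L2: "T \<subseteq> L2 N \<Longrightarrow> lincomb T \<subseteq> L2 N"
  unfolding lincomb_def by (auto intro!: L2_sum L2_scale)

lemma cspan_L2: "cspan N T \<subseteq> L2 N" by (auto simp: cspan_def)

lemma cspan_sqs: "f \<in> cspan N T \<Longrightarrow> sqs f" using cspan_L2 L2_sqs by blast
lemma lincomb_sqs: "T \<subseteq> L2 N \<Longrightarrow> h \<in> lincomb T \<Longrightarrow> sqs h" using lincomb_L2 L2_sqs by blast

lemma cspanD: "f \<in> cspan N T \<Longrightarrow> e > 0 \<Longrightarrow> \<exists>h\<in>lincomb T. nrm (\<lambda>g. f g - h g) < e"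
  by (simp add: cspan_def)

lemma cspanI: "f \<in> L2 N \<Longrightarrow> (\<And>e. e > 0 \<Longrightarrow> \<exists>h\<in>lincomb T. nrm (\<lambda>g. f g - h g) < e) \<Longrightarrow> f \<in> cspan N T"
  by (simp add: cspan_def)

lemma lincomb_cspan: "T \<subseteq> L2 N \<Longrightarrow> lincomb T \<subseteq> cspan N T"
proof
  fix h assume T: "T \<subseteq> L2 N" and h: "h \<in> lincomb T"
  have "h \<in> L2 N" using lincomb_L2[OF T] h by auto
  moreover have "nrm (\<lambda>g. h g - h g) < e" if "e > 0" for e
    using that by (simp add: nrm_eq l2n_def sqn_def)
  ultimately show "h \<in> cspan N T" using h by (intro cspanI) (auto intro!: bexI[where x=h])
qed

lemma cspan_mono: "T \<subseteq> T' \<Longrightarrow> cspan N T \<subseteq> cspan N T'"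
  unfolding cspan_def using lincomb_mono by blast

lemma cspan_zero: "(\<lambda>g. 0) \<in> cspan N T"
  by (intro cspanI L2_zero bexI[OF _ lincomb_zero]) (simp add: nrm_eq l2n_def sqn_def)

lemma cspan_add:
  assumes T: "T \<subseteq> L2 N" and f: "f \<in> cspan N T" and h: "h \<in> cspan N T"
  shows "(\<lambda>g. f g + h g) \<in> cspan N T"
proof (rule cspanI)
  show "(\<lambda>g. f g + h g) \<in> L2 N" using f h cspan_L2 by (auto intro: L2_add)
  fix e :: real assume "e > 0"
  hence e2: "e/2 > 0" by simp
  obtain h1 where h1: "h1 \<in> lincomb T" "nrm (\<lambda>g. f g - h1 g) < e/2"
    using cspanD[OF f e2] by blast
  obtain h2 where h2: "h2 \<in> lincomb T" "nrm (\<lambda>g. h g - h2 g) < e/2"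
    using cspanD[OF h e2] by blast
  have s: "sqs f" "sqs h" "sqs h1" "sqs h2"
    using f h h1 h2 cspan_sqs lincomb_sqs[OF T] by auto
  have "l2n (\<lambda>g. (f g - h1 g) + (h g - h2 g)) \<le> l2n (\<lambda>g. f g - h1 g) + l2n (\<lambda>g. h g - h2 g)"
    by (rule l2n_triangle) (use s in \<open>auto intro: sqs_diff\<close>)
  moreover have "(\<lambda>g. f g + h g - (h1 g + h2 g)) = (\<lambda>g. (f g - h1 g) + (h g - h2 g))"
    by (rule ext) (simp add: algebra_simps)
  ultimately have "nrm (\<lambda>g. f g + h g - (h1 g + h2 g)) < e"
    using h1 h2 by (simp add: nrm_eq)
  thus "\<exists>h'\<in>lincomb T. nrm (\<lambda>g. f g + h g - h' g) < e"
    using lincomb_add[OF h1(1) h2(1)] by (intro bexI[where x="\<lambda>g. h1 g + h2 g"]) auto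
qed

lemma cspan_scale:
  assumes T: "T \<subseteq> L2 N" and f: "f \<in> cspan N T"
  shows "(\<lambda>g. a * f g) \<in> cspan N T"
proof (cases "a = 0")
  case True thus ?thesis using cspan_zero by simp
next
  case False
  show ?thesis
  proof (rule cspanI)
    show "(\<lambda>g. a * f g) \<in> L2 N" using f cspan_L2 by (auto intro: L2_scale)
    fix e :: real assume "e > 0"
    hence "e / cmod a > 0" using False by simp
    then obtain h1 where h1: "h1 \<in> lincomb T" "nrm (\<lambda>g. f g - h1 g) < e / cmod a"
      using cspanD[OF f] by blast
    have s: "sqs (\<lambda>g. f g - h1 g)"
      using cspan_sqs[OF f] lincomb_sqs[OF T h1(1)] by (rule sqs_diff)
    have eq: "(\<lambda>g. a * f g - a * h1 g) = (\<lambda>g. a * (f g - h1 g))"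
      by (rule ext) (simp add: algebra_simps)
    have "nrm (\<lambda>g. a * f g - a * h1 g) = cmod a * nrm (\<lambda>g. f g - h1 g)"
      unfolding eq nrm_eq by (rule l2n_scale[OF s])
    also have "\<dots> < e" using h1 False by (simp add: field_simps)
    finally show "\<exists>h'\<in>lincomb T. nrm (\<lambda>g. a * f g - h' g) < e"
      using lincomb_scale[OF h1(1), of a] by (intro bexI[where x="\<lambda>g. a * h1 g"]) auto
  qed
qed

lemma cspan_sum:
  assumes T: "T \<subseteq> L2 N"
  shows "finite A \<Longrightarrow> (\<And>a. a \<in> A \<Longrightarrow> u a \<in> cspan N T) \<Longrightarrow> (\<lambda>g. \<Sum>a\<in>A. c a * u a g) \<in> cspan N T"
proof (induction A rule: finite_induct)
  case empty thus ?case by (simp add: cspan_zero)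
next
  case (insert a A)
  have "(\<lambda>g. c a * u a g + (\<Sum>a\<in>A. c a * u a g)) \<in> cspan N T"
    using insert by (intro cspan_add[OF T] cspan_scale[OF T]) auto
  thus ?case using insert by simp
qed

lemma lincomb_sub_cspan:
  assumes T': "T' \<subseteq> L2 N" and sub: "T \<subseteq> cspan N T'"
  shows "lincomb T \<subseteq> cspan N T'"
proof
  fix h assume "h \<in> lincomb T"
  then obtain F c where F: "finite F" "F \<subseteq> T" "h = (\<lambda>g. \<Sum>v\<in>F. c v * v g)"
    unfolding lincomb_def by blast
  have "(\<lambda>g. \<Sum>v\<in>F. c v * v g) \<in> cspan N T'"
    by (rule cspan_sum[OF T' F(1)]) (use F sub in blast)
  thus "h \<in> cspan N T'" using F by simp
qed

lemma cspan_trans: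
  assumes T': "T' \<subseteq> L2 N" and sub: "T \<subseteq> cspan N T'"
  shows "cspan N T \<subseteq> cspan N T'"
proof
  fix f assume f: "f \<in> cspan N T"
  show "f \<in> cspan N T'"
  proof (rule cspanI)
    show "f \<in> L2 N" using f cspan_L2 by blast
    fix e :: real assume "e > 0"
    hence e2: "e/2 > 0" by simp
    obtain h where h: "h \<in> lincomb T" "nrm (\<lambda>g. f g - h g) < e/2"
      using cspanD[OF f e2] by blast
    have hc: "h \<in> cspan N T'" using lincomb_sub_cspan[OF T' sub] h(1) by blast
    obtain h' where h': "h' \<in> lincomb T'" "nrm (\<lambda>g. h g - h' g) < e/2"
      using cspanD[OF hc e2] by blast
    have s: "sqs f" "sqs h" "sqs h'"
      using f hc h' cspan_sqs lincomb_sqs[OF T'] by auto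
    have "l2n (\<lambda>g. f g - h' g) \<le> l2n (\<lambda>g. f g - h g) + l2n (\<lambda>g. h g - h' g)"
      by (rule l2n_diff_triangle[OF s])
    hence "nrm (\<lambda>g. f g - h' g) < e" using h h' by (simp add: nrm_eq)
    thus "\<exists>h\<in>lincomb T'. nrm (\<lambda>g. f g - h g) < e" using h' by blast
  qed
qed

lemma Kc_pos: "Kc N > 0" by (simp add: Kc_def)
lemma kp_mult: "kp N a * kp N b = kp N (a + b)"
  by (simp add: kp_def powr_add Kc_pos)
lemma kp_0: "kp N 0 = 1" using Kc_pos[of N] by (simp add: kp_def)
lemma kp_nz: "kp N a \<noteq> 0" using Kc_pos[of N] by (simp add: kp_def)

locale RB =
  fixes N :: nat and \<xi> :: "nat \<Rightarrow> vec" and l :: "nat \<Rightarrow> nat" and \<sigma> :: "nat \<Rightarrow> int"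
  assumes N: "N \<ge> 1"
    and xi_in: "\<And>i. i \<ge> 1 \<Longrightarrow> \<xi> i \<in> L2 N \<and> (\<forall>g. length g \<noteq> l i \<longrightarrow> \<xi> i g = 0) \<and> nrm (\<xi> i) = 1 \<and> l i \<ge> 1"
    and fin1: "finite {i. i \<ge> 1 \<and> l i = 1}"
    and orth: "\<And>i j x y. i \<ge> 1 \<Longrightarrow> j \<ge> 1 \<Longrightarrow> i \<noteq> j \<Longrightarrow> x \<in> Hmod N (\<xi> i) \<Longrightarrow> y \<in> Hmod N (\<xi> j) \<Longrightarrow> ip x y = 0"
    and decomp: "ocompl N = cspan N (\<Union>i\<in>{i. i \<ge> 1}. Hmod N (\<xi> i))"
    and onb: "\<And>i. i \<ge> 1 \<Longrightarrow> l i \<ge> 2 \<Longrightarrow>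
       orthonormal_basis N (\<lambda>(n::nat, m::nat). xinm N (l i) (\<xi> i) (int n) (int m)) (Hmod N (\<xi> i))"
    and form2: "\<And>i n m. i \<ge> 1 \<Longrightarrow> l i \<ge> 2 \<Longrightarrow>
       bimul N n (\<xi> i) m = (\<lambda>g.
          kp N ((real n + real m) / 2) * xinm N (l i) (\<xi> i) (int n) (int m) g
        - kp N ((real n + real m - 2) / 2) * (xinm N (l i) (\<xi> i) (int n) (int m - 2) g
                                             + xinm N (l i) (\<xi> i) (int n - 2) (int m) g)
        + kp N ((real n + real m - 4) / 2) * xinm N (l i) (\<xi> i) (int n - 2) (int m - 2) g)"
    and form1: "\<And>i n m. i \<ge> 1 \<Longrightarrow> l i = 1 \<Longrightarrow>
       bimul N n (\<xi> i) m = (\<lambda>g.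
          kp N ((real n + real m) / 2) * xinm N 1 (\<xi> i) (int n) (int m) g
        - kp N ((real n + real m - 2) / 2) * (xinm N 1 (\<xi> i) (int n) (int m - 2) g
                                             + xinm N 1 (\<xi> i) (int n - 2) (int m) g
                                             + of_int (\<sigma> i) * xinm N 1 (\<xi> i) (int n - 1) (int m - 1) g)
        + (\<Sum>k\<in>{2..n + m + 2}. of_int ((- \<sigma> i) ^ k) * kp N ((real n + real m - 2 * real k) / 2) *
             (of_int (\<sigma> i) * xinm N 1 (\<xi> i) (int n - int k - 1) (int m - int k + 1) g
              + of_int (\<sigma> i) * xinm N 1 (\<xi> i) (int n - int k + 1) (int m - int k - 1) g
              + 2 * xinm N 1 (\<xi> i) (int n - int k) (int m - int k) g)))"
    and S_bdd: "\<exists>B. \<forall>i j F c. i \<ge> 1 \<longrightarrow> j \<ge> 1 \<longrightarrow> finite F \<longrightarrow>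
       nrm (\<lambda>g. \<Sum>(n, m)\<in>F. c (n, m) * bimul N n (\<xi> j) m g)
         \<le> B * nrm (\<lambda>g. \<Sum>(n, m)\<in>F. c (n, m) * bimul N n (\<xi> i) m g)"
begin

definition II :: "(nat \<times> nat \<times> nat) set" where "II = {(i, n, m). i \<ge> 1}"
definition ee :: "nat \<times> nat \<times> nat \<Rightarrow> vec" where "ee \<alpha> = (case \<alpha> of (i, n, m) \<Rightarrow> eta N (\<xi> i) n m)"
definition TT :: "nat \<Rightarrow> vec set" where "TT i = {bimul N n (\<xi> i) m | n m. True}"

lemma Hmod_TT: "Hmod N (\<xi> i) = cspan N (TT i)" by (simp add: Hmod_def TT_def)

lemma bimul_L2: assumes "i \<ge> 1" shows "bimul N n (\<xi> i) m \<in> L2 N"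
proof -
  have "l i \<ge> 1" using xi_in[OF assms] by blast
  hence "l i \<ge> 2 \<or> l i = 1" by linarith
  thus ?thesis
  proof
    assume "l i \<ge> 2"
    show ?thesis unfolding form2[OF assms \<open>l i \<ge> 2\<close>]
      by (intro L2_add L2_diff L2_scale xinm_L2)
  next
    assume "l i = 1"
    show ?thesis unfolding form1[OF assms \<open>l i = 1\<close>]
      by (intro L2_add L2_diff L2_scale xinm_L2 L2_sum finite_atLeastAtMost)
  qed
qed

lemma eta_L2': "i \<ge> 1 \<Longrightarrow> eta N (\<xi> i) n m \<in> L2 N"
  by (rule eta_L2[OF bimul_L2])

lemma TT_L2: "i \<ge> 1 \<Longrightarrow> TT i \<subseteq> L2 N" using bimul_L2 by (auto simp: TT_def)

lemma ee_L2: "ee ` II \<subseteq> L2 N" using eta_L2' by (auto simp: ee_def II_def)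

lemma eta_lincomb_TT: "eta N (\<xi> i) n m \<in> lincomb (TT i)"
  unfolding eta_def by (rule lincomb_scale, rule lincomb_mem) (auto simp: TT_def)

lemma eta_Hmod: "i \<ge> 1 \<Longrightarrow> eta N (\<xi> i) n m \<in> Hmod N (\<xi> i)"
  unfolding Hmod_TT using lincomb_cspan[OF TT_L2] eta_lincomb_TT by blast

lemma bimul_lincomb_ee: assumes "i \<ge> 1" shows "bimul N n (\<xi> i) m \<in> lincomb (ee ` II)"
proof -
  have "eta N (\<xi> i) n m \<in> ee ` II" using assms
    by (intro image_eqI[where x="(i, n, m)"]) (auto simp: ee_def II_def)
  hence "(\<lambda>g. kp N ((real n + real m) / 2) * eta N (\<xi> i) n m g) \<in> lincomb (ee ` II)"
    by (intro lincomb_scale lincomb_mem)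
  moreover have "(\<lambda>g. kp N ((real n + real m) / 2) * eta N (\<xi> i) n m g) = bimul N n (\<xi> i) m"
  proof
    fix g
    have "(real n + real m) / 2 + (- (real n + real m) / 2) = 0" by (simp add: field_simps)
    hence "kp N ((real n + real m) / 2) * kp N (- (real n + real m) / 2) = 1"
      by (simp only: kp_mult kp_0)
    thus "kp N ((real n + real m) / 2) * eta N (\<xi> i) n m g = bimul N n (\<xi> i) m g"
      unfolding eta_def by (metis mult.assoc mult_1)
  qed
  ultimately show ?thesis by simp
qed

lemma cspan_ee: "cspan N (ee ` II) = ocompl N"
proof
  have "ee ` II \<subseteq> (\<Union>i\<in>{i. i \<ge> 1}. Hmod N (\<xi> i))"
    using eta_Hmod by (auto simp: ee_def II_def)
  thus "cspan N (ee ` II) \<subseteq> ocompl N" unfolding decomp by (rule cspan_mono)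
next
  have "Hmod N (\<xi> i) \<subseteq> cspan N (ee ` II)" if "i \<ge> 1" for i
    unfolding Hmod_TT
  proof (rule cspan_trans[OF ee_L2])
    show "TT i \<subseteq> cspan N (ee ` II)"
      using bimul_lincomb_ee[OF that] lincomb_cspan[OF ee_L2] by (auto simp: TT_def)
  qed
  hence "(\<Union>i\<in>{i. i \<ge> 1}. Hmod N (\<xi> i)) \<subseteq> cspan N (ee ` II)" by auto
  thus "ocompl N \<subseteq> cspan N (ee ` II)" unfolding decomp by (rule cspan_trans[OF ee_L2])
qed

end

lemma shift_bound:
  fixes u w :: "'a \<Rightarrow> complex"
  assumes u: "sqs u" and h: "inj h" and w: "\<And>p. cmod (w p) \<le> cmod (u (h p))" and t: "0 \<le> t"
  shows "sqs (\<lambda>p. u p - of_real t * w p)"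
    "(1 - t) * l2n u \<le> l2n (\<lambda>p. u p - of_real t * w p)"
    "l2n (\<lambda>p. u p - of_real t * w p) \<le> (1 + t) * l2n u"
proof -
  have uh: "sqs (\<lambda>p. u (h p))" "l2n (\<lambda>p. u (h p)) \<le> l2n u" using l2n_inj[OF h u] by auto
  have ws: "sqs w" "l2n w \<le> l2n (\<lambda>p. u (h p))" using l2n_mono[OF w uh(1)] by auto
  have tw: "sqs (\<lambda>p. of_real t * w p)" "l2n (\<lambda>p. of_real t * w p) = t * l2n w"
    using sqs_scale[OF ws(1)] l2n_scale[OF ws(1)] t by auto
  show s: "sqs (\<lambda>p. u p - of_real t * w p)" by (rule sqs_diff[OF u tw(1)])
  have "l2n u \<le> l2n (\<lambda>p. u p - of_real t * w p) + l2n (\<lambda>p. of_real t * w p)"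
    using l2n_triangle[OF s tw(1)] by simp
  moreover have "t * l2n w \<le> t * l2n u" using ws(2) uh(2) t by (simp add: mult_left_mono)
  ultimately show "(1 - t) * l2n u \<le> l2n (\<lambda>p. u p - of_real t * w p)" using tw(2)
    by (simp add: algebra_simps)
  have "l2n (\<lambda>p. u p + (- (of_real t * w p))) \<le> l2n u + l2n (\<lambda>p. - (of_real t * w p))"
    by (rule l2n_triangle[OF u sqs_minus[OF tw(1)]])
  hence "l2n (\<lambda>p. u p - of_real t * w p) \<le> l2n u + t * l2n w"
    using tw(2) l2n_minus[of "\<lambda>p. of_real t * w p"] by simp
  thus "l2n (\<lambda>p. u p - of_real t * w p) \<le> (1 + t) * l2n u"
    using \<open>t * l2n w \<le> t * l2n u\<close> by (simp add: algebra_simps)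
qed

lemma sum_shift:
  fixes c :: "int \<times> int \<Rightarrow> complex" and X :: "int \<times> int \<Rightarrow> 'b \<Rightarrow> complex"
  shows "(\<Sum>p\<in>S. c p * X (fst p - a, snd p - b) g) =
         (\<Sum>p\<in>(\<lambda>p. (fst p - a, snd p - b)) ` S. c (fst p + a, snd p + b) * X p g)"
proof -
  have "inj (\<lambda>p::int \<times> int. (fst p - a, snd p - b))" by (auto simp: inj_def prod_eq_iff)
  hence "(\<Sum>p\<in>(\<lambda>p. (fst p - a, snd p - b)) ` S. c (fst p + a, snd p + b) * X p g) =
     (\<Sum>p\<in>S. c (fst p - a + a, snd p - b + b) * X (fst p - a, snd p - b) g)"
    by (subst sum.reindex) (auto simp: inj_on_def prod_eq_iff)
  thus ?thesis by simp
qed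

lemma sum_comb4:
  fixes a b c e X :: "'i \<Rightarrow> complex"
  shows "(\<Sum>p\<in>S. (a p - t * (b p + c p) + t2 * e p) * X p) =
    (\<Sum>p\<in>S. a p * X p) - t * ((\<Sum>p\<in>S. b p * X p) + (\<Sum>p\<in>S. c p * X p)) + t2 * (\<Sum>p\<in>S. e p * X p)"
proof -
  have "(\<Sum>p\<in>S. (a p - t * (b p + c p) + t2 * e p) * X p) =
     (\<Sum>p\<in>S. a p * X p - t * (b p * X p) - t * (c p * X p) + t2 * (e p * X p))"
    by (rule sum.cong) (simp_all add: algebra_simps)
  also have "\<dots> = (\<Sum>p\<in>S. a p * X p) - t * (\<Sum>p\<in>S. b p * X p) - t * (\<Sum>p\<in>S. c p * X p) + t2 * (\<Sum>p\<in>S. e p * X p)"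
    by (simp only: sum.distrib sum_subtractf sum_distrib_left)
  finally show ?thesis by (simp add: algebra_simps)
qed

lemma sum_comb4':
  fixes a b c e X :: "'i \<Rightarrow> complex"
  shows "(\<Sum>p\<in>S. X p * (a p - t * (b p + c p) + t2 * e p)) =
    (\<Sum>p\<in>S. X p * a p) - t * ((\<Sum>p\<in>S. X p * b p) + (\<Sum>p\<in>S. X p * c p)) + t2 * (\<Sum>p\<in>S. X p * e p)"
  using sum_comb4[of a t b c t2 e X S] by (simp add: mult.commute)

lemma shift_ext:
  fixes c :: "int \<times> int \<Rightarrow> complex" and X :: "int \<times> int \<Rightarrow> 'b \<Rightarrow> complex"
  assumes S: "finite S" "(\<lambda>p. (fst p - a, snd p - b)) ` G \<subseteq> S"
    and z: "\<And>p. p \<notin> G \<Longrightarrow> c p = 0"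
  shows "(\<Sum>p\<in>G. c p * X (fst p - a, snd p - b) g) = (\<Sum>p\<in>S. c (fst p + a, snd p + b) * X p g)"
proof -
  have "(\<Sum>p\<in>G. c p * X (fst p - a, snd p - b) g) =
         (\<Sum>p\<in>(\<lambda>p. (fst p - a, snd p - b)) ` G. c (fst p + a, snd p + b) * X p g)"
    by (rule sum_shift)
  also have "\<dots> = (\<Sum>p\<in>S. c (fst p + a, snd p + b) * X p g)"
  proof (rule sum.mono_neutral_left[OF S(1) S(2)])
    show "\<forall>p\<in>S - (\<lambda>p. (fst p - a, snd p - b)) ` G. c (fst p + a, snd p + b) * X p g = 0"
    proof
      fix p assume p: "p \<in> S - (\<lambda>p. (fst p - a, snd p - b)) ` G"
      have "(fst p + a, snd p + b) \<notin> G"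
      proof
        assume "(fst p + a, snd p + b) \<in> G"
        hence "(fst (fst p + a, snd p + b) - a, snd (fst p + a, snd p + b) - b) \<in> (\<lambda>p. (fst p - a, snd p - b)) ` G"
          by (rule imageI)
        thus False using p by simp
      qed
      thus "c (fst p + a, snd p + b) * X p g = 0" using z by simp
    qed
  qed
  finally show ?thesis .
qed

context RB
begin

lemma ex_i0: "\<exists>i0. i0 \<ge> 1 \<and> l i0 \<ge> 2"
proof (rule ccontr)
  assume "\<not> ?thesis"
  hence "{i. i \<ge> 1} \<subseteq> {i. i \<ge> 1 \<and> l i = 1}" using xi_in by force
  hence "finite {i::nat. i \<ge> 1}" using fin1 finite_subset by blast
  then obtain M where "\<forall>i\<in>{i::nat. i \<ge> 1}. i \<le> M" using finite_nat_set_iff_bounded_le by blast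
  hence "Suc M \<le> M" by simp
  thus False by simp
qed


context fixes i0 assumes i0: "i0 \<ge> 1" "l i0 \<ge> 2"
begin

definition X :: "int \<times> int \<Rightarrow> vec" where "X p = xinm N (l i0) (\<xi> i0) (fst p) (snd p)"
definition Qset :: "(int \<times> int) set" where "Qset = {p. 0 \<le> fst p \<and> 0 \<le> snd p}"
definition PQ :: "(int \<times> int \<Rightarrow> complex) \<Rightarrow> int \<times> int \<Rightarrow> complex" where
  "PQ c = (\<lambda>p. if p \<in> Qset then c p else 0)"

lemma X_neg: "p \<notin> Qset \<Longrightarrow> X p g = 0"
  by (auto simp: X_def xinm_def Qset_def)

lemma X_sqs: "sqs (X p)" unfolding X_def by (rule L2_sqs[OF xinm_L2])

lemma X_on: assumes "p \<in> Qset" "q \<in> Qset" shows "ipg (X p) (X q) = (if p = q then 1 else 0)"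
proof -
  define v where "v = (\<lambda>(n::nat, m::nat). xinm N (l i0) (\<xi> i0) (int n) (int m))"
  have o: "\<And>a b. ip (v a) (v b) = (if a = b then 1 else 0)"
    using onb[OF i0] unfolding v_def orthonormal_basis_def by blast
  have xp: "X p = v (nat (fst p), nat (snd p))"
    using assms by (simp add: X_def Qset_def v_def)
  have xq: "X q = v (nat (fst q), nat (snd q))"
    using assms by (simp add: X_def Qset_def v_def)
  have eq: "((nat (fst p), nat (snd p)) = (nat (fst q), nat (snd q))) = (p = q)"
    using assms by (auto simp: Qset_def prod_eq_iff)
  show ?thesis unfolding xp xq ip_eq[symmetric] o eq ..
qed

lemma sqn_Phi:
  assumes S: "finite S" and z: "\<And>p. p \<notin> S \<Longrightarrow> c p = 0"
  shows "sqn (\<lambda>g. \<Sum>p\<in>S. c p * X p g) = sqn (PQ c)"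
proof -
  have e: "(\<lambda>g. \<Sum>p\<in>S. c p * X p g) = (\<lambda>g. \<Sum>p\<in>S \<inter> Qset. c p * X p g)"
    by (rule ext, rule sum.mono_neutral_right[OF S]) (auto simp: X_neg)
  have "sqn (\<lambda>g. \<Sum>p\<in>S \<inter> Qset. c p * X p g) = (\<Sum>p\<in>S \<inter> Qset. (cmod (c p))^2)"
    by (rule orthonormal_sqn) (use S in \<open>auto simp: X_sqs X_on\<close>)
  also have "\<dots> = sqn (PQ c)"
    by (subst fin_sqs(2)[of "S \<inter> Qset"]) (use S z in \<open>auto simp: PQ_def\<close>)
  finally show ?thesis using e by simp
qed

abbreviation tt :: real where "tt \<equiv> 1 / Kc N"

lemma tt_props: "0 < tt" "tt < 1"
  using N by (auto simp: Kc_def)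

lemma eta_X:
  "eta N (\<xi> i0) n m g = X (int n, int m) g
     - of_real tt * (X (int n, int m - 2) g + X (int n - 2, int m) g)
     + (of_real tt)^2 * X (int n - 2, int m - 2) g"
proof -
  define s where "s = real n + real m"
  have k1: "kp N (- s / 2) * kp N (s / 2) = 1"
    by (simp add: kp_mult kp_0)
  have k2: "kp N (- s / 2) * kp N ((s - 2) / 2) = of_real tt"
  proof -
    have "kp N (- s / 2) * kp N ((s - 2) / 2) = kp N (-1)" unfolding kp_mult
      by (rule arg_cong[where f="kp N"]) (simp add: field_simps)
    also have "\<dots> = of_real tt" using Kc_pos[of N] by (simp add: kp_def powr_minus_divide)
    finally show ?thesis .
  qed
  have k3: "kp N (- s / 2) * kp N ((s - 4) / 2) = (of_real tt)^2"
  proof -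
    have "kp N (- s / 2) * kp N ((s - 4) / 2) = kp N (-2)" unfolding kp_mult
      by (rule arg_cong[where f="kp N"]) (simp add: field_simps)
    also have "\<dots> = (of_real tt)^2" using Kc_pos[of N]
      by (simp add: kp_def powr_minus_divide power_divide)
    finally show ?thesis .
  qed
  have "eta N (\<xi> i0) n m g = kp N (- s / 2) * (kp N (s / 2) * X (int n, int m) g
        - kp N ((s - 2) / 2) * (X (int n, int m - 2) g + X (int n - 2, int m) g)
        + kp N ((s - 4) / 2) * X (int n - 2, int m - 2) g)"
    unfolding eta_def form2[OF i0] s_def X_def by simp
  also have "\<dots> = (kp N (- s / 2) * kp N (s / 2)) * X (int n, int m) g
        - (kp N (- s / 2) * kp N ((s - 2) / 2)) * (X (int n, int m - 2) g + X (int n - 2, int m) g)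
        + (kp N (- s / 2) * kp N ((s - 4) / 2)) * X (int n - 2, int m - 2) g"
    by (simp add: algebra_simps)
  finally show ?thesis unfolding k1 k2 k3 by simp
qed

lemma fin_i0:
  fixes G :: "(nat \<times> nat) set" and c :: "nat \<times> nat \<Rightarrow> complex"
  assumes G: "finite G"
  shows "(1 - tt)^4 * (\<Sum>x\<in>G. (cmod (c x))^2) \<le> sqn (\<lambda>g. \<Sum>(n, m)\<in>G. c (n, m) * eta N (\<xi> i0) n m g)"
    "sqn (\<lambda>g. \<Sum>(n, m)\<in>G. c (n, m) * eta N (\<xi> i0) n m g) \<le> (1 + tt)^4 * (\<Sum>x\<in>G. (cmod (c x))^2)"
proof -
  define emb :: "nat \<times> nat \<Rightarrow> int \<times> int" where "emb = (\<lambda>(n, m). (int n, int m))"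
  have inj_emb: "inj emb" by (auto simp: emb_def inj_def)
  define G' where "G' = emb ` G"
  have fG': "finite G'" using G by (simp add: G'_def)
  define c' where "c' p = (if p \<in> G' then c (nat (fst p), nat (snd p)) else 0)" for p
  have c'z: "\<And>p. p \<notin> G' \<Longrightarrow> c' p = 0" by (simp add: c'_def)
  have c'emb: "c' (emb x) = c x" if "x \<in> G" for x
    using that by (auto simp: c'_def G'_def emb_def split: prod.splits)
  have c'emb2: "c' (int a, int b) = c (a, b)" if "(a, b) \<in> G" for a b
    using c'emb[OF that] by (simp add: emb_def)
  define tc :: complex where "tc = of_real tt"
  define sh :: "int \<Rightarrow> int \<Rightarrow> int \<times> int \<Rightarrow> int \<times> int" where "sh a b p = (fst p - a, snd p - b)" for a b p
  define S where "S = G' \<union> sh 0 2 ` G' \<union> sh 2 0 ` G' \<union> sh 2 2 ` G'"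
  have fS: "finite S" using fG' by (simp add: S_def)
  define d where "d p = c' p - tc * (c' (fst p + 0, snd p + 2) + c' (fst p + 2, snd p + 0))
                     + tc^2 * c' (fst p + 2, snd p + 2)" for p
  have v_eq: "(\<lambda>g. \<Sum>(n, m)\<in>G. c (n, m) * eta N (\<xi> i0) n m g) = (\<lambda>g. \<Sum>p\<in>S. d p * X p g)"
  proof
    fix g
    have "(\<Sum>(n, m)\<in>G. c (n, m) * eta N (\<xi> i0) n m g) =
      (\<Sum>x\<in>G. c' (emb x) * (X (emb x) g - tc * (X (fst (emb x) - 0, snd (emb x) - 2) g + X (fst (emb x) - 2, snd (emb x) - 0) g)
          + tc^2 * X (fst (emb x) - 2, snd (emb x) - 2) g))"
      by (rule sum.cong) (auto simp: c'emb2 eta_X emb_def tc_def)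
    also have "\<dots> = (\<Sum>p\<in>G'. c' p * (X p g - tc * (X (fst p - 0, snd p - 2) g + X (fst p - 2, snd p - 0) g)
          + tc^2 * X (fst p - 2, snd p - 2) g))"
      unfolding G'_def by (subst sum.reindex[OF inj_on_subset[OF inj_emb]]) auto
    also have "\<dots> = (\<Sum>p\<in>G'. c' p * X p g) - tc * ((\<Sum>p\<in>G'. c' p * X (fst p - 0, snd p - 2) g)
          + (\<Sum>p\<in>G'. c' p * X (fst p - 2, snd p - 0) g)) + tc^2 * (\<Sum>p\<in>G'. c' p * X (fst p - 2, snd p - 2) g)"
      by (rule sum_comb4')
    also have "(\<Sum>p\<in>G'. c' p * X p g) = (\<Sum>p\<in>S. c' p * X p g)"
      by (rule sum.mono_neutral_left[OF fS]) (auto simp: S_def c'z)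
    also have "(\<Sum>p\<in>G'. c' p * X (fst p - 0, snd p - 2) g) = (\<Sum>p\<in>S. c' (fst p + 0, snd p + 2) * X p g)"
      by (rule shift_ext[OF fS _ c'z]) (auto simp: S_def sh_def)
    also have "(\<Sum>p\<in>G'. c' p * X (fst p - 2, snd p - 0) g) = (\<Sum>p\<in>S. c' (fst p + 2, snd p + 0) * X p g)"
      by (rule shift_ext[OF fS _ c'z]) (auto simp: S_def sh_def)
    also have "(\<Sum>p\<in>G'. c' p * X (fst p - 2, snd p - 2) g) = (\<Sum>p\<in>S. c' (fst p + 2, snd p + 2) * X p g)"
      by (rule shift_ext[OF fS _ c'z]) (auto simp: S_def sh_def)
    also have "(\<Sum>p\<in>S. c' p * X p g) - tc * ((\<Sum>p\<in>S. c' (fst p + 0, snd p + 2) * X p g)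
          + (\<Sum>p\<in>S. c' (fst p + 2, snd p + 0) * X p g)) + tc^2 * (\<Sum>p\<in>S. c' (fst p + 2, snd p + 2) * X p g)
        = (\<Sum>p\<in>S. d p * X p g)"
      unfolding d_def by (rule sum_comb4[symmetric])
    finally show "(\<Sum>(n, m)\<in>G. c (n, m) * eta N (\<xi> i0) n m g) = (\<Sum>p\<in>S. d p * X p g)" .
  qed
  have dz: "\<And>p. p \<notin> S \<Longrightarrow> d p = 0"
  proof -
    fix p assume p: "p \<notin> S"
    have "c' p = 0" using p by (auto simp: S_def intro: c'z)
    moreover have "c' (fst p + a, snd p + b) = 0" if ab: "(a, b) \<in> {(0, 2), (2, 0), (2, 2)}" for a b
    proof (rule c'z)
      show "(fst p + a, snd p + b) \<notin> G'"
      proof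
        assume "(fst p + a, snd p + b) \<in> G'"
        hence "sh a b (fst p + a, snd p + b) \<in> sh a b ` G'" by (rule imageI)
        hence "p \<in> sh a b ` G'" by (simp add: sh_def)
        hence "p \<in> S" using ab by (auto simp: S_def)
        thus False using p by simp
      qed
    qed
    ultimately show "d p = 0" unfolding d_def
      using \<open>c' p = 0\<close> by (metis (no_types) insertCI add.right_neutral add_0 mult_zero_right diff_zero)
  qed
  have sqv: "sqn (\<lambda>g. \<Sum>(n, m)\<in>G. c (n, m) * eta N (\<xi> i0) n m g) = sqn (PQ d)"
    unfolding v_eq by (rule sqn_Phi[OF fS dz])
  have c'sq: "sqs c'" by (rule fin_sqs(1)[OF fG' c'z])
  have c'Q: "PQ c' = c'"
    by (rule ext) (auto simp: PQ_def Qset_def c'_def G'_def emb_def)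
  define h1 :: "int \<times> int \<Rightarrow> int \<times> int" where "h1 p = (fst p, snd p + 2)" for p
  define h2 :: "int \<times> int \<Rightarrow> int \<times> int" where "h2 p = (fst p + 2, snd p)" for p
  have ih1: "inj h1" by (auto simp: inj_def h1_def prod_eq_iff)
  have ih2: "inj h2" by (auto simp: inj_def h2_def prod_eq_iff)
  define w1 where "w1 = PQ (\<lambda>p. c' (h1 p))"
  define u where "u = (\<lambda>p. c' p - of_real tt * w1 p)"
  define w2 where "w2 = PQ (\<lambda>p. u (h2 p))"
  have t0: "0 \<le> tt" using tt_props by simp
  have w1b: "cmod (w1 p) \<le> cmod (c' (h1 p))" for p by (simp add: w1_def PQ_def)
  note B1 = shift_bound[OF c'sq ih1 w1b t0, folded u_def]
  have w2b: "cmod (w2 p) \<le> cmod (u (h2 p))" for p by (simp add: w2_def PQ_def)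
  note B2 = shift_bound[OF B1(1) ih2 w2b t0]
  have PQd: "PQ d = (\<lambda>p. u p - of_real tt * w2 p)"
  proof
    fix p
    show "PQ d p = u p - of_real tt * w2 p"
    proof (cases "p \<in> Qset")
      case True
      have q2: "(fst p + 2, snd p) \<in> Qset" using True by (auto simp: Qset_def)
      have w1p: "w1 q = c' (fst q, snd q + 2)" if "q \<in> Qset" for q
        using that by (simp add: w1_def PQ_def h1_def)
      have w2p: "w2 p = c' (fst p + 2, snd p) - of_real tt * c' (fst p + 2, snd p + 2)"
        using True q2 w1p[OF q2] by (simp add: w2_def PQ_def h2_def u_def)
      show ?thesis using True
        by (simp add: PQ_def d_def u_def w1p w2p tc_def algebra_simps power2_eq_square)
    next
      case False
      have "c' p = 0" using False c'Q by (metis PQ_def)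
      thus ?thesis using False by (simp add: PQ_def u_def w1_def w2_def)
    qed
  qed
  have lo: "(1 - tt)^2 * l2n c' \<le> l2n (PQ d)"
  proof -
    have "(1 - tt) * ((1 - tt) * l2n c') \<le> (1 - tt) * l2n u"
      using B1(2) tt_props by (intro mult_left_mono) (auto simp: u_def)
    also have "\<dots> \<le> l2n (PQ d)" using B2(2) by (simp add: PQd)
    finally show ?thesis by (simp add: power2_eq_square mult.assoc)
  qed
  have up: "l2n (PQ d) \<le> (1 + tt)^2 * l2n c'"
  proof -
    have "l2n (PQ d) \<le> (1 + tt) * l2n u" using B2(3) by (simp add: PQd)
    also have "\<dots> \<le> (1 + tt) * ((1 + tt) * l2n c')"
      using B1(3) tt_props by (intro mult_left_mono) (auto simp: u_def)
    finally show ?thesis by (simp add: power2_eq_square mult.assoc)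
  qed
  have sc': "sqn c' = (\<Sum>x\<in>G. (cmod (c x))^2)"
  proof -
    have "sqn c' = (\<Sum>p\<in>G'. (cmod (c' p))^2)" by (rule fin_sqs(2)[OF fG' c'z])
    also have "\<dots> = (\<Sum>x\<in>G. (cmod (c' (emb x)))^2)"
      unfolding G'_def by (subst sum.reindex[OF inj_on_subset[OF inj_emb]]) auto
    also have "\<dots> = (\<Sum>x\<in>G. (cmod (c x))^2)" by (rule sum.cong) (auto simp: c'emb)
    finally show ?thesis .
  qed
  have nn: "0 \<le> (1 - tt)^2 * l2n c'" using tt_props by (simp add: l2n_nonneg)
  have "((1 - tt)^2 * l2n c')^2 \<le> (l2n (PQ d))^2" by (rule power_mono[OF lo nn])
  thus "(1 - tt)^4 * (\<Sum>x\<in>G. (cmod (c x))^2) \<le> sqn (\<lambda>g. \<Sum>(n, m)\<in>G. c (n, m) * eta N (\<xi> i0) n m g)"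
    unfolding sqv l2n_sq[symmetric] sc'[symmetric] by (simp add: power_mult_distrib flip: power_mult)
  have "(l2n (PQ d))^2 \<le> ((1 + tt)^2 * l2n c')^2" by (rule power_mono[OF up l2n_nonneg])
  thus "sqn (\<lambda>g. \<Sum>(n, m)\<in>G. c (n, m) * eta N (\<xi> i0) n m g) \<le> (1 + tt)^4 * (\<Sum>x\<in>G. (cmod (c x))^2)"
    unfolding sqv l2n_sq[symmetric] sc'[symmetric] by (simp add: power_mult_distrib flip: power_mult)
qed

end

end

context RB
begin

lemma E_conv: "(\<lambda>g. \<Sum>x\<in>G. c x * ee (i, x) g) = (\<lambda>g. \<Sum>(n, m)\<in>G. c (n, m) * eta N (\<xi> i) n m g)"
  by (simp add: ee_def split_def)

lemma E_conv_bimul: "(\<lambda>g. \<Sum>x\<in>G. c x * ee (i, x) g) =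
   (\<lambda>g. \<Sum>(n, m)\<in>G. (c (n, m) * kp N (- (real n + real m) / 2)) * bimul N n (\<xi> i) m g)"
  by (simp add: ee_def eta_def split_def mult.assoc)

lemma fin_bounds: "\<exists>a b. 0 < a \<and> a \<le> b \<and> (\<forall>i G c. i \<ge> 1 \<longrightarrow> finite G \<longrightarrow>
    a * (\<Sum>x\<in>G. (cmod (c x))^2) \<le> sqn (\<lambda>g. \<Sum>x\<in>G. c x * ee (i, x) g) \<and>
    sqn (\<lambda>g. \<Sum>x\<in>G. c x * ee (i, x) g) \<le> b * (\<Sum>x\<in>G. (cmod (c x))^2))"
proof -
  obtain i0 where i0: "i0 \<ge> 1" "l i0 \<ge> 2" using ex_i0 by blast
  obtain B where B: "\<forall>i j F c. i \<ge> 1 \<longrightarrow> j \<ge> 1 \<longrightarrow> finite F \<longrightarrow>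
       nrm (\<lambda>g. \<Sum>(n, m)\<in>F. c (n, m) * bimul N n (\<xi> j) m g)
         \<le> B * nrm (\<lambda>g. \<Sum>(n, m)\<in>F. c (n, m) * bimul N n (\<xi> i) m g)"
    using S_bdd by blast
  define B1 where "B1 = max B 1"
  have B1: "B1 \<ge> 1" by (simp add: B1_def)
  have cmp: "l2n (\<lambda>g. \<Sum>x\<in>G. c x * ee (j, x) g) \<le> B1 * l2n (\<lambda>g. \<Sum>x\<in>G. c x * ee (i, x) g)"
    if "i \<ge> 1" "j \<ge> 1" "finite G" for i j G c
  proof -
    have "l2n (\<lambda>g. \<Sum>x\<in>G. c x * ee (j, x) g) \<le> B * l2n (\<lambda>g. \<Sum>x\<in>G. c x * ee (i, x) g)"
      unfolding E_conv_bimul nrm_eq[symmetric]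
      using B[rule_format, OF that, of "\<lambda>(n, m). c (n, m) * kp N (- (real n + real m) / 2)"]
      by (simp add: split_def)
    also have "\<dots> \<le> B1 * l2n (\<lambda>g. \<Sum>x\<in>G. c x * ee (i, x) g)"
      by (intro mult_right_mono) (auto simp: B1_def l2n_nonneg)
    finally show ?thesis .
  qed
  define t where "t = 1 / Kc N"
  have t: "0 < t" "t < 1" using N by (auto simp: t_def Kc_def)
  define a where "a = (1 - t)^4 / B1^2"
  define b where "b = B1^2 * (1 + t)^4"
  have a0: "0 < a" using t B1 by (simp add: a_def)
  have ab: "a \<le> b"
  proof -
    have B2: "1 \<le> B1^2" using B1 by (simp add: one_le_power)
    have "a \<le> (1 - t)^4" unfolding a_def using B2 t
      by (intro divide_left_mono_neg[of 1 "B1^2", simplified] | simp add: divide_le_eq)+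
    also have "(1 - t)^4 \<le> (1 + t)^4" using t by (intro power_mono) auto
    also have "\<dots> \<le> B1^2 * (1 + t)^4" using B2 t
      by (intro mult_right_mono[of 1 "B1^2", simplified]) auto
    finally show ?thesis by (simp add: b_def)
  qed
  have main: "a * (\<Sum>x\<in>G. (cmod (c x))^2) \<le> sqn (\<lambda>g. \<Sum>x\<in>G. c x * ee (i, x) g) \<and>
    sqn (\<lambda>g. \<Sum>x\<in>G. c x * ee (i, x) g) \<le> b * (\<Sum>x\<in>G. (cmod (c x))^2)"
    if i: "i \<ge> 1" and G: "finite G" for i G c
  proof -
    let ?s = "\<Sum>x\<in>G. (cmod (c x))^2"
    let ?v = "\<lambda>j. (\<lambda>g. \<Sum>x\<in>G. c x * ee (j, x) g)"
    have f0: "(1 - t)^4 * ?s \<le> sqn (?v i0)" "sqn (?v i0) \<le> (1 + t)^4 * ?s"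
      using fin_i0[OF i0 G, of c] unfolding E_conv[symmetric] t_def by auto
    have c1: "l2n (?v i) \<le> B1 * l2n (?v i0)" by (rule cmp[OF i0(1) i G])
    have c2: "l2n (?v i0) \<le> B1 * l2n (?v i)" by (rule cmp[OF i i0(1) G])
    have "sqn (?v i) = (l2n (?v i))^2" by (simp add: l2n_sq)
    also have "\<dots> \<le> (B1 * l2n (?v i0))^2" by (rule power_mono[OF c1 l2n_nonneg])
    also have "\<dots> = B1^2 * sqn (?v i0)" by (simp add: power_mult_distrib l2n_sq)
    also have "\<dots> \<le> B1^2 * ((1 + t)^4 * ?s)" using f0(2) by (intro mult_left_mono) auto
    finally have up: "sqn (?v i) \<le> b * ?s" by (simp add: b_def)
    have "(1 - t)^4 * ?s \<le> sqn (?v i0)" by (rule f0(1))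
    also have "\<dots> = (l2n (?v i0))^2" by (simp add: l2n_sq)
    also have "\<dots> \<le> (B1 * l2n (?v i))^2" by (rule power_mono[OF c2 l2n_nonneg])
    also have "\<dots> = B1^2 * sqn (?v i)" by (simp add: power_mult_distrib l2n_sq)
    finally have "(1 - t)^4 * ?s \<le> B1^2 * sqn (?v i)" .
    moreover have "a * ?s = ((1 - t)^4 * ?s) / B1^2" by (simp add: a_def)
    moreover have "0 < B1^2" using B1 by simp
    ultimately have lo: "a * ?s \<le> sqn (?v i)" by (simp add: divide_le_eq mult.commute)
    show ?thesis using up lo by blast
  qed
  show ?thesis using a0 ab main by blast
qed


lemma ee_lincomb: "ee (i, x) \<in> lincomb (TT i)"
  by (cases x) (simp add: ee_def eta_lincomb_TT)

lemma ee_L2i: "i \<ge> 1 \<Longrightarrow> ee (i, x) \<in> L2 N"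
  by (cases x) (simp add: ee_def eta_L2')

lemma ee_L2a: "\<alpha> \<in> II \<Longrightarrow> ee \<alpha> \<in> L2 N"
  using ee_L2 by blast

lemma Ei_Hmod: assumes "i \<ge> 1" "finite G"
  shows "(\<lambda>g. \<Sum>x\<in>G. c x * ee (i, x) g) \<in> Hmod N (\<xi> i)"
proof -
  have "(\<lambda>g. \<Sum>x\<in>G. c x * ee (i, x) g) \<in> lincomb (TT i)"
    by (rule lincomb_sum[OF assms(2)]) (rule ee_lincomb)
  thus ?thesis unfolding Hmod_TT using lincomb_cspan[OF TT_L2[OF assms(1)]] by blast
qed

lemma finF_bounds: "\<exists>a b. 0 < a \<and> a \<le> b \<and> (\<forall>F c. finite F \<longrightarrow> F \<subseteq> II \<longrightarrow>
    a * (\<Sum>\<alpha>\<in>F. (cmod (c \<alpha>))^2) \<le> sqn (\<lambda>g. \<Sum>\<alpha>\<in>F. c \<alpha> * ee \<alpha> g) \<and>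
    sqn (\<lambda>g. \<Sum>\<alpha>\<in>F. c \<alpha> * ee \<alpha> g) \<le> b * (\<Sum>\<alpha>\<in>F. (cmod (c \<alpha>))^2))"
proof -
  obtain a b where ab: "0 < a" "a \<le> b" and bd: "\<And>i G c. i \<ge> 1 \<Longrightarrow> finite G \<Longrightarrow>
    a * (\<Sum>x\<in>G. (cmod (c x))^2) \<le> sqn (\<lambda>g. \<Sum>x\<in>G. c x * ee (i, x) g) \<and>
    sqn (\<lambda>g. \<Sum>x\<in>G. c x * ee (i, x) g) \<le> b * (\<Sum>x\<in>G. (cmod (c x))^2)"
    using fin_bounds by blast
  have "a * (\<Sum>\<alpha>\<in>F. (cmod (c \<alpha>))^2) \<le> sqn (\<lambda>g. \<Sum>\<alpha>\<in>F. c \<alpha> * ee \<alpha> g) \<and>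
    sqn (\<lambda>g. \<Sum>\<alpha>\<in>F. c \<alpha> * ee \<alpha> g) \<le> b * (\<Sum>\<alpha>\<in>F. (cmod (c \<alpha>))^2)"
    if F: "finite F" "F \<subseteq> II" for F c
  proof -
    define J where "J = fst ` F"
    define Gi where "Gi i = {x. (i, x) \<in> F}" for i
    have fJ: "finite J" using F by (simp add: J_def)
    have fG: "finite (Gi i)" for i
    proof -
      have "Gi i \<subseteq> snd ` F" by (force simp: Gi_def)
      thus ?thesis using F finite_subset by blast
    qed
    have J1: "i \<ge> 1" if "i \<in> J" for i using that F by (auto simp: J_def II_def)
    have FS: "F = Sigma J Gi" by (force simp: J_def Gi_def)
    have sumF: "(\<Sum>\<alpha>\<in>F. f \<alpha>) = (\<Sum>i\<in>J. \<Sum>x\<in>Gi i. f (i, x))" for f :: "_ \<Rightarrow> 'z::comm_monoid_add"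
      unfolding FS by (subst sum.Sigma[OF fJ]) (auto simp: fG)
    define Ei where "Ei i = (\<lambda>g. \<Sum>x\<in>Gi i. c (i, x) * ee (i, x) g)" for i
    have vE: "(\<lambda>g. \<Sum>\<alpha>\<in>F. c \<alpha> * ee \<alpha> g) = (\<lambda>g. \<Sum>i\<in>J. Ei i g)"
      by (rule ext) (simp add: sumF Ei_def)
    have Ei_sqs: "sqs (Ei i)" if "i \<in> J" for i
      unfolding Ei_def using J1[OF that] by (intro L2_sqs[of _ N] L2_sum fG L2_scale ee_L2i)
    have Ei_H: "Ei i \<in> Hmod N (\<xi> i)" if "i \<in> J" for i
      unfolding Ei_def by (rule Ei_Hmod[OF J1[OF that] fG])
    have pyt: "sqn (\<lambda>g. \<Sum>i\<in>J. Ei i g) = (\<Sum>i\<in>J. sqn (Ei i))"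
    proof (rule pyth[OF fJ Ei_sqs])
      fix i j assume "i \<in> J" "j \<in> J" "i \<noteq> j"
      thus "ipg (Ei i) (Ei j) = 0" using orth[OF J1 J1 _ Ei_H Ei_H] by (simp add: ip_eq)
    qed
    have sF: "(\<Sum>\<alpha>\<in>F. (cmod (c \<alpha>))^2) = (\<Sum>i\<in>J. \<Sum>x\<in>Gi i. (cmod (c (i, x)))^2)" by (rule sumF)
    have lo: "a * (\<Sum>x\<in>Gi i. (cmod (c (i, x)))^2) \<le> sqn (Ei i)" if "i \<in> J" for i
      using bd[OF J1[OF that] fG, of "\<lambda>x. c (i, x)"] by (simp add: Ei_def)
    have up: "sqn (Ei i) \<le> b * (\<Sum>x\<in>Gi i. (cmod (c (i, x)))^2)" if "i \<in> J" for i
      using bd[OF J1[OF that] fG, of "\<lambda>x. c (i, x)"] by (simp add: Ei_def)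
    have L: "(\<Sum>i\<in>J. a * (\<Sum>x\<in>Gi i. (cmod (c (i, x)))^2)) \<le> (\<Sum>i\<in>J. sqn (Ei i))"
      by (rule sum_mono) (rule lo)
    have U: "(\<Sum>i\<in>J. sqn (Ei i)) \<le> (\<Sum>i\<in>J. b * (\<Sum>x\<in>Gi i. (cmod (c (i, x)))^2))"
      by (rule sum_mono) (rule up)
    show ?thesis unfolding vE pyt sF using L U by (simp only: sum_distrib_left[symmetric])
  qed
  thus ?thesis using ab by blast
qed

end

lemma hs_approx:
  fixes u :: "'a \<Rightarrow> real"
  assumes "(u has_sum T) A" "e > 0"
  shows "\<exists>F0. finite F0 \<and> F0 \<subseteq> A \<and> (\<forall>F. finite F \<and> F0 \<subseteq> F \<and> F \<subseteq> A \<longrightarrow> \<bar>sum u F - T\<bar> < e)"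
proof -
  have "eventually (\<lambda>F. dist (sum u F) T < e) (finite_subsets_at_top A)"
    using assms unfolding has_sum_def by (rule tendstoD)
  thus ?thesis unfolding eventually_finite_subsets_at_top by (auto simp: dist_real_def)
qed

lemma l2n_cont: "sqs f \<Longrightarrow> sqs h \<Longrightarrow> \<bar>l2n f - l2n h\<bar> \<le> l2n (\<lambda>x. f x - h x)"
proof -
  assume s: "sqs f" "sqs h"
  have "l2n (\<lambda>x. (f x - h x) + h x) \<le> l2n (\<lambda>x. f x - h x) + l2n h"
    by (rule l2n_triangle[OF sqs_diff[OF s] s(2)])
  moreover have "l2n (\<lambda>x. (h x - f x) + f x) \<le> l2n (\<lambda>x. h x - f x) + l2n f"
    by (rule l2n_triangle[OF sqs_diff[OF s(2) s(1)] s(1)])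
  ultimately show ?thesis using l2n_diff_comm[of f h] by simp
qed

lemma limit_zero:
  assumes "\<And>k. f k x = 0" "(\<lambda>k. f k x) \<longlonglongrightarrow> y"
  shows "y = (0::complex)"
proof -
  have "(\<lambda>k. f k x) = (\<lambda>k. 0)" using assms(1) by simp
  thus ?thesis using assms(2) LIMSEQ_unique[OF _ tendsto_const[of "0::complex"]] by metis
qed


lemma l2n_diff_le: "sqs f \<Longrightarrow> sqs h \<Longrightarrow> l2n (\<lambda>x. f x - h x) \<le> l2n f + l2n h"
  using l2n_triangle[of f "\<lambda>x. - h x"] sqs_minus[of h] l2n_minus[of h] by simp

lemma seq_from_eps:
  fixes s :: "nat \<Rightarrow> real"
  assumes "\<And>e. e > 0 \<Longrightarrow> \<exists>K. \<forall>k\<ge>K. \<bar>s k - T\<bar> \<le> e"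
  shows "s \<longlonglongrightarrow> T"
proof (rule LIMSEQ_I)
  fix r :: real assume "r > 0"
  then obtain K where "\<forall>k\<ge>K. \<bar>s k - T\<bar> \<le> r / 2" using assms[of "r/2"] by auto
  thus "\<exists>no. \<forall>n\<ge>no. norm (s n - T) < r" using \<open>r > 0\<close> by (intro exI[of _ K]) force
qed

lemma inv_suc_small: "e > 0 \<Longrightarrow> \<exists>K. \<forall>k\<ge>K. c / real (Suc k) < e"
proof -
  assume e: "e > 0"
  obtain K where K: "real K > c / e" using reals_Archimedean2 by blast
  have "c / real (Suc k) < e" if "k \<ge> K" for k
  proof -
    have "c / e < real (Suc k)" using K that by linarith
    thus ?thesis using e by (simp add: divide_less_eq mult.commute pos_divide_less_eq)
  qed
  thus ?thesis by blast
qed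

context RB
begin

definition SF :: "(nat \<times> nat \<times> nat) set \<Rightarrow> (nat \<times> nat \<times> nat \<Rightarrow> complex) \<Rightarrow> vec" where
  "SF F c = (\<lambda>g. \<Sum>\<alpha>\<in>F. c \<alpha> * ee \<alpha> g)"

lemma SF_L2: "finite F \<Longrightarrow> F \<subseteq> II \<Longrightarrow> SF F c \<in> L2 N"
  unfolding SF_def by (intro L2_sum L2_scale ee_L2a) auto

lemma SF_sqs: "finite F \<Longrightarrow> F \<subseteq> II \<Longrightarrow> sqs (SF F c)"
  using SF_L2 L2_sqs by blast

lemma SF_diff: "(\<lambda>g. SF F c g - SF F d g) = SF F (\<lambda>\<alpha>. c \<alpha> - d \<alpha>)"
  unfolding SF_def by (rule ext) (simp add: sum_subtractf algebra_simps)

lemma SF_split: "finite F \<Longrightarrow> F0 \<subseteq> F \<Longrightarrow> SF F c = (\<lambda>g. SF F0 c g + SF (F - F0) c g)"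
  unfolding SF_def by (rule ext) (simp add: sum.subset_diff[of F0 F] add.commute)

lemma SF_ext: "finite F \<Longrightarrow> F0 \<subseteq> F \<Longrightarrow> (\<And>\<alpha>. \<alpha> \<notin> F0 \<Longrightarrow> c \<alpha> = 0) \<Longrightarrow> SF F c = SF F0 c"
  unfolding SF_def by (rule ext) (rule sum.mono_neutral_right, auto)

context
  fixes ra rb :: real
  assumes rab: "0 < ra" "ra \<le> rb"
    and bnd: "\<And>F c. finite F \<Longrightarrow> F \<subseteq> II \<Longrightarrow>
      ra * (\<Sum>\<alpha>\<in>F. (cmod (c \<alpha>))^2) \<le> sqn (SF F c) \<and> sqn (SF F c) \<le> rb * (\<Sum>\<alpha>\<in>F. (cmod (c \<alpha>))^2)"
begin

lemma SF_up: "finite F \<Longrightarrow> F \<subseteq> II \<Longrightarrow> l2n (SF F c) \<le> sqrt (rb * (\<Sum>\<alpha>\<in>F. (cmod (c \<alpha>))^2))"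
  using bnd by (simp add: l2n_def)

lemma SF_up2: "finite F \<Longrightarrow> F \<subseteq> II \<Longrightarrow> sqs c \<Longrightarrow> l2n (SF F c) \<le> sqrt rb * l2n c"
proof -
  assume a: "finite F" "F \<subseteq> II" "sqs c"
  have "l2n (SF F c) \<le> sqrt (rb * (\<Sum>\<alpha>\<in>F. (cmod (c \<alpha>))^2))" by (rule SF_up[OF a(1,2)])
  also have "\<dots> \<le> sqrt (rb * sqn c)"
    using sum_le_sqn[OF a(3) a(1)] rab by (intro real_sqrt_le_mono mult_left_mono) auto
  also have "\<dots> = sqrt rb * l2n c" by (simp add: l2n_def real_sqrt_mult)
  finally show ?thesis .
qed

lemma synth:
  assumes c: "(\<lambda>\<alpha>. (cmod (c \<alpha>))^2) summable_on II"
  shows "\<exists>x. has_sum_l2 N (\<lambda>\<alpha> g. c \<alpha> * ee \<alpha> g) II x \<and>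
     ra * infsum (\<lambda>\<alpha>. (cmod (c \<alpha>))^2) II \<le> (nrm x)^2 \<and> (nrm x)^2 \<le> rb * infsum (\<lambda>\<alpha>. (cmod (c \<alpha>))^2) II"
proof -
  define u where "u \<alpha> = (cmod (c \<alpha>))^2" for \<alpha>
  have u0: "u \<alpha> \<ge> 0" for \<alpha> by (simp add: u_def)
  define T where "T = infsum u II"
  have hs: "(u has_sum T) II" using c unfolding T_def u_def[abs_def] by (simp add: summable_iff_has_sum_infsum)
  have "\<forall>k. \<exists>F0. finite F0 \<and> F0 \<subseteq> II \<and> (\<forall>F. finite F \<and> F0 \<subseteq> F \<and> F \<subseteq> II \<longrightarrow> \<bar>sum u F - T\<bar> < 1 / real (Suc k))"
    using hs_approx[OF hs] by simp
  then obtain F0 where F0: "\<And>k. finite (F0 k)" "\<And>k. F0 k \<subseteq> II"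
    "\<And>k F. finite F \<Longrightarrow> F0 k \<subseteq> F \<Longrightarrow> F \<subseteq> II \<Longrightarrow> \<bar>sum u F - T\<bar> < 1 / real (Suc k)"
    by metis
  define G where "G k = (\<Union>j\<le>k. F0 j)" for k
  have Gf: "finite (G k)" for k using F0 by (simp add: G_def)
  have GI: "G k \<subseteq> II" for k using F0 by (auto simp: G_def)
  have GF0: "F0 k \<subseteq> G k" for k by (auto simp: G_def)
  have Gmono: "k \<le> j \<Longrightarrow> G k \<subseteq> G j" for k j unfolding G_def by (rule UN_mono) auto
  have Gappr: "\<bar>sum u (G k) - T\<bar> < 1 / real (Suc k)" for k using F0(3)[OF Gf GF0 GI] .
  have tail: "sum u F < 2 / real (Suc k)" if F: "finite F" "F \<subseteq> II" "F \<inter> G k = {}" for k F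
  proof -
    have "\<bar>sum u (F \<union> G k) - T\<bar> < 1 / real (Suc k)"
      using F0(3)[of "F \<union> G k" k] F GF0[of k] Gf[of k] GI[of k] by auto
    moreover have "sum u (F \<union> G k) = sum u F + sum u (G k)"
      using F Gf by (simp add: sum.union_disjoint)
    ultimately show ?thesis using Gappr[of k] by linarith
  qed
  define xk where "xk k = SF (G k) c" for k
  have xs: "sqs (xk k)" for k unfolding xk_def by (rule SF_sqs[OF Gf GI])
  have step: "l2n (\<lambda>g. xk j g - xk k g) \<le> sqrt (rb * (2 / real (Suc k)))" if "k \<le> j" for k j
  proof -
    have "xk j = (\<lambda>g. xk k g + SF (G j - G k) c g)"
      unfolding xk_def by (rule SF_split[OF Gf Gmono[OF that]])
    hence "(\<lambda>g. xk j g - xk k g) = SF (G j - G k) c" by (simp add: fun_eq_iff)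
    hence "l2n (\<lambda>g. xk j g - xk k g) \<le> sqrt (rb * sum u (G j - G k))"
      using SF_up[of "G j - G k" c] Gf GI by (auto simp: u_def)
    also have "\<dots> \<le> sqrt (rb * (2 / real (Suc k)))"
    proof -
      have "G j - G k \<subseteq> II" using GI[of j] by blast
      hence "sum u (G j - G k) < 2 / real (Suc k)" using tail[of "G j - G k" k] Gf by blast
      thus ?thesis using rab by (intro real_sqrt_le_mono mult_left_mono) auto
    qed
    finally show ?thesis .
  qed
  have small: "\<exists>K. \<forall>k\<ge>K. sqrt (rb * (2 / real (Suc k))) < e" if "e > 0" for e
  proof -
    have e2: "e^2 > 0" using that by simp
    obtain K where K: "\<forall>k\<ge>K. (2 * rb) / real (Suc k) < e^2" using inv_suc_small[OF e2, of "2 * rb"] by blast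
    have "sqrt (rb * (2 / real (Suc k))) < e" if "k \<ge> K" for k
    proof -
      have "rb * (2 / real (Suc k)) < e^2" using K that by (simp add: mult.commute)
      hence "sqrt (rb * (2 / real (Suc k))) < sqrt (e^2)" by (rule real_sqrt_less_mono)
      thus ?thesis using \<open>e > 0\<close> by simp
    qed
    thus ?thesis by blast
  qed
  have C: "\<exists>K. \<forall>j\<ge>K. \<forall>k\<ge>K. l2n (\<lambda>g. xk j g - xk k g) < e" if e_pos: "e > 0" for e
  proof -
    obtain K where K: "\<forall>k\<ge>K. sqrt (rb * (2 / real (Suc k))) < e" using small[OF e_pos] by blast
    have "l2n (\<lambda>g. xk j g - xk k g) < e" if "j \<ge> K" "k \<ge> K" for j k
    proof (cases "k \<le> j")
      case True thus ?thesis using step[OF True] K that by fastforce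
    next
      case False
      hence "l2n (\<lambda>g. xk k g - xk j g) < e" using step[of j k] K that by fastforce
      thus ?thesis using l2n_diff_comm[of "xk j" "xk k"] by simp
    qed
    thus ?thesis by blast
  qed
  obtain y where y: "sqs y" "\<And>g. (\<lambda>k. xk k g) \<longlonglongrightarrow> y g"
    "\<And>e. e > 0 \<Longrightarrow> \<exists>K. \<forall>k\<ge>K. l2n (\<lambda>g. y g - xk k g) \<le> e"
    using l2_complete[OF xs C] by blast
  have yL2: "y \<in> L2 N"
    unfolding L2_iff
  proof (intro conjI allI impI y(1))
    fix g assume "g \<notin> Gam N"
    hence "\<And>k. xk k g = 0" using SF_L2[OF Gf GI] by (auto simp: xk_def L2_iff)
    thus "y g = 0" using limit_zero y(2) by metis
  qed
  have hsl: "has_sum_l2 N (\<lambda>\<alpha> g. c \<alpha> * ee \<alpha> g) II y"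
    unfolding has_sum_l2_def
  proof (intro conjI allI impI yL2)
    fix e :: real assume e: "e > 0"
    obtain k1 where k1: "\<forall>k\<ge>k1. l2n (\<lambda>g. y g - xk k g) \<le> e/2" using y(3)[of "e/2"] e by auto
    obtain k2 where k2: "\<forall>k\<ge>k2. sqrt (rb * (2 / real (Suc k))) < e/2" using small[of "e/2"] e by auto
    define k where "k = max k1 k2"
    have a1: "l2n (\<lambda>g. y g - xk k g) \<le> e/2" using k1 by (simp add: k_def)
    have a2: "sqrt (rb * (2 / real (Suc k))) < e/2" using k2 by (simp add: k_def)
    show "\<exists>F0. finite F0 \<and> F0 \<subseteq> II \<and> (\<forall>F. finite F \<and> F0 \<subseteq> F \<and> F \<subseteq> II \<longrightarrow>
        nrm (\<lambda>g. y g - (\<Sum>\<alpha>\<in>F. c \<alpha> * ee \<alpha> g)) < e)"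
    proof (intro exI[of _ "G k"] conjI allI impI)
      show "finite (G k)" "G k \<subseteq> II" by (rule Gf, rule GI)
      fix F assume F: "finite F \<and> G k \<subseteq> F \<and> F \<subseteq> II"
      have "SF F c = (\<lambda>g. xk k g + SF (F - G k) c g)"
        unfolding xk_def using F by (intro SF_split) auto
      hence eq: "(\<lambda>g. y g - (\<Sum>\<alpha>\<in>F. c \<alpha> * ee \<alpha> g)) = (\<lambda>g. (y g - xk k g) - SF (F - G k) c g)"
        by (simp add: fun_eq_iff SF_def algebra_simps)
      have sq: "sqs (SF (F - G k) c)" using F by (intro SF_sqs) auto
      have "l2n (\<lambda>g. (y g - xk k g) - SF (F - G k) c g) \<le> l2n (\<lambda>g. y g - xk k g) + l2n (SF (F - G k) c)"
        by (rule l2n_diff_le[OF sqs_diff[OF y(1) xs] sq])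
      also have "l2n (SF (F - G k) c) \<le> sqrt (rb * sum u (F - G k))"
        using SF_up[of "F - G k" c] F by (auto simp: u_def)
      also have "\<dots> \<le> sqrt (rb * (2 / real (Suc k)))"
      proof -
        have "F - G k \<subseteq> II" "(F - G k) \<inter> G k = {}" "finite (F - G k)" using F by auto
        hence "sum u (F - G k) < 2 / real (Suc k)" using tail[of "F - G k" k] by blast
        thus ?thesis using rab by (intro real_sqrt_le_mono mult_left_mono) auto
      qed
      finally show "nrm (\<lambda>g. y g - (\<Sum>\<alpha>\<in>F. c \<alpha> * ee \<alpha> g)) < e"
        unfolding eq nrm_eq using a1 a2 by linarith
    qed
  qed
  have sl: "(\<lambda>k. sum u (G k)) \<longlonglongrightarrow> T"
  proof (rule seq_from_eps)
    fix e :: real assume "e > 0"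
    then obtain K where "\<forall>k\<ge>K. 1 / real (Suc k) < e" using inv_suc_small[of e 1] by auto
    thus "\<exists>K. \<forall>k\<ge>K. \<bar>sum u (G k) - T\<bar> \<le> e" using Gappr by (meson less_imp_le order.strict_trans)
  qed
  have nl: "(\<lambda>k. l2n (xk k)) \<longlonglongrightarrow> l2n y"
  proof (rule seq_from_eps)
    fix e :: real assume "e > 0"
    then obtain K where K: "\<forall>k\<ge>K. l2n (\<lambda>g. y g - xk k g) \<le> e" using y(3) by blast
    have "\<bar>l2n (xk k) - l2n y\<bar> \<le> e" if "k \<ge> K" for k
    proof -
      have "l2n (\<lambda>g. y g - xk k g) \<le> e" using K that by blast
      thus ?thesis using l2n_cont[OF y(1) xs, of k] by (simp add: abs_minus_commute)
    qed
    thus "\<exists>K. \<forall>k\<ge>K. \<bar>l2n (xk k) - l2n y\<bar> \<le> e" by blast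
  qed
  have ql: "(\<lambda>k. sqn (xk k)) \<longlonglongrightarrow> sqn y"
    using tendsto_power[OF nl, of 2] by (simp add: l2n_sq)
  have bk: "ra * sum u (G k) \<le> sqn (xk k) \<and> sqn (xk k) \<le> rb * sum u (G k)" for k
    using bnd[OF Gf GI, of c] by (simp add: xk_def u_def)
  have L: "ra * T \<le> sqn y"
    by (rule tendsto_le[OF trivial_limit_sequentially ql tendsto_mult[OF tendsto_const sl]]) (use bk in auto)
  have U: "sqn y \<le> rb * T"
    by (rule tendsto_le[OF trivial_limit_sequentially tendsto_mult[OF tendsto_const sl] ql]) (use bk in auto)
  show ?thesis using hsl L U by (intro exI[of _ y]) (simp add: nrm_eq l2n_sq T_def u_def[abs_def])
qed

lemma lincomb_rep:
  assumes "h \<in> lincomb (ee ` II)"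
  shows "\<exists>F d. finite F \<and> F \<subseteq> II \<and> (\<forall>\<alpha>. \<alpha> \<notin> F \<longrightarrow> d \<alpha> = 0) \<and> h = SF F d"
proof -
  obtain V cv where V: "finite V" "V \<subseteq> ee ` II" "h = (\<lambda>g. \<Sum>v\<in>V. cv v * v g)"
    using assms unfolding lincomb_def by blast
  define r where "r v = (SOME \<alpha>. \<alpha> \<in> II \<and> ee \<alpha> = v)" for v
  have r: "r v \<in> II \<and> ee (r v) = v" if "v \<in> V" for v
  proof -
    have "\<exists>\<alpha>. \<alpha> \<in> II \<and> ee \<alpha> = v" using V(2) that by blast
    thus ?thesis unfolding r_def by (rule someI_ex)
  qed
  have inj: "inj_on r V" by (rule inj_onI) (metis r)
  define F where "F = r ` V"
  define d where "d \<alpha> = (if \<alpha> \<in> F then cv (ee \<alpha>) else 0)" for \<alpha>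
  have "SF F d = h"
  proof
    fix g
    have "SF F d g = (\<Sum>v\<in>V. d (r v) * ee (r v) g)"
      unfolding SF_def F_def by (rule sum.reindex[OF inj, unfolded comp_def])
    also have "\<dots> = (\<Sum>v\<in>V. cv v * v g)"
      by (rule sum.cong) (auto simp: d_def F_def r)
    finally show "SF F d g = h g" using V by simp
  qed
  moreover have "finite F" "F \<subseteq> II" using V r by (auto simp: F_def)
  ultimately show ?thesis by (intro exI[of _ F] exI[of _ d]) (auto simp: d_def)
qed

lemma decomp_ex:
  assumes x: "x \<in> ocompl N"
  shows "\<exists>b. (\<forall>\<alpha>. \<alpha> \<notin> II \<longrightarrow> b \<alpha> = 0) \<and> sqs b \<and> has_sum_l2 N (\<lambda>\<alpha> g. b \<alpha> * ee \<alpha> g) II x"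
proof -
  have xc: "x \<in> cspan N (ee ` II)" using x cspan_ee by simp
  have xs: "sqs x" using cspan_sqs[OF xc] .
  have xL: "x \<in> L2 N" using xc cspan_L2 by blast
  have "\<forall>k. \<exists>F d. finite F \<and> F \<subseteq> II \<and> (\<forall>\<alpha>. \<alpha> \<notin> F \<longrightarrow> d \<alpha> = 0) \<and>
      l2n (\<lambda>g. x g - SF F d g) < 1 / real (Suc k)"
  proof
    fix k
    obtain h where h: "h \<in> lincomb (ee ` II)" "nrm (\<lambda>g. x g - h g) < 1 / real (Suc k)"
      using cspanD[OF xc, of "1 / real (Suc k)"] by auto
    obtain F d where "finite F" "F \<subseteq> II" "\<forall>\<alpha>. \<alpha> \<notin> F \<longrightarrow> d \<alpha> = 0" "h = SF F d"
      using lincomb_rep[OF h(1)] by blast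
    thus "\<exists>F d. finite F \<and> F \<subseteq> II \<and> (\<forall>\<alpha>. \<alpha> \<notin> F \<longrightarrow> d \<alpha> = 0) \<and>
      l2n (\<lambda>g. x g - SF F d g) < 1 / real (Suc k)" using h(2) by (auto simp: nrm_eq)
  qed
  then obtain Fk dk where Fk: "\<And>k. finite (Fk k)" "\<And>k. Fk k \<subseteq> II" "\<And>k \<alpha>. \<alpha> \<notin> Fk k \<Longrightarrow> dk k \<alpha> = 0"
    "\<And>k. l2n (\<lambda>g. x g - SF (Fk k) (dk k) g) < 1 / real (Suc k)"
    by metis
  define hk where "hk k = SF (Fk k) (dk k)" for k
  have hs: "sqs (hk k)" for k unfolding hk_def by (rule SF_sqs[OF Fk(1,2)])
  have ds: "sqs (dk k)" for k by (rule fin_sqs(1)[OF Fk(1) Fk(3)])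
  have dbound: "sqn (\<lambda>\<alpha>. dk j \<alpha> - dk k \<alpha>) \<le> (1 / real (Suc j) + 1 / real (Suc k))^2 / ra" for j k
  proof -
    define U where "U = Fk j \<union> Fk k"
    have fU: "finite U" "U \<subseteq> II" using Fk by (auto simp: U_def)
    define D where "D \<alpha> = dk j \<alpha> - dk k \<alpha>" for \<alpha>
    have Dz: "\<alpha> \<notin> U \<Longrightarrow> D \<alpha> = 0" for \<alpha> using Fk(3) by (auto simp: D_def U_def)
    have e1: "SF U (dk j) = hk j" unfolding hk_def by (rule SF_ext[OF fU(1)]) (auto simp: U_def Fk(3))
    have e2: "SF U (dk k) = hk k" unfolding hk_def by (rule SF_ext[OF fU(1)]) (auto simp: U_def Fk(3))
    have SD: "SF U D = (\<lambda>g. hk j g - hk k g)"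
      using SF_diff[of U "dk j" "dk k"] e1 e2 by (simp add: D_def[abs_def])
    have "l2n (\<lambda>g. hk j g - hk k g) \<le> l2n (\<lambda>g. hk j g - x g) + l2n (\<lambda>g. x g - hk k g)"
      by (rule l2n_diff_triangle[OF hs xs hs])
    also have "\<dots> < 1 / real (Suc j) + 1 / real (Suc k)"
      using Fk(4)[of j] Fk(4)[of k] l2n_diff_comm[of "hk j" x] by (simp add: hk_def)
    finally have lt: "l2n (SF U D) \<le> 1 / real (Suc j) + 1 / real (Suc k)" unfolding SD by simp
    have "ra * sqn D = ra * (\<Sum>\<alpha>\<in>U. (cmod (D \<alpha>))^2)" using fin_sqs(2)[OF fU(1) Dz] by simp
    also have "\<dots> \<le> sqn (SF U D)" using bnd[OF fU] by blast
    also have "\<dots> = (l2n (SF U D))^2" by (simp add: l2n_sq)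
    also have "\<dots> \<le> (1 / real (Suc j) + 1 / real (Suc k))^2" by (rule power_mono[OF lt l2n_nonneg])
    finally show ?thesis using rab by (simp add: D_def[abs_def] pos_le_divide_eq mult.commute)
  qed
  have C: "\<exists>K. \<forall>j\<ge>K. \<forall>k\<ge>K. l2n (\<lambda>\<alpha>. dk j \<alpha> - dk k \<alpha>) < e" if e_pos: "e > 0" for e
  proof -
    have "e * sqrt ra > 0" using e_pos rab by simp
    then obtain K where K: "\<forall>k\<ge>K. 1 / real (Suc k) < e * sqrt ra / 2"
      using inv_suc_small[of "e * sqrt ra / 2" 1] by auto
    have "l2n (\<lambda>\<alpha>. dk j \<alpha> - dk k \<alpha>) < e" if "j \<ge> K" "k \<ge> K" for j k
    proof -
      have "1 / real (Suc j) < e * sqrt ra / 2" "1 / real (Suc k) < e * sqrt ra / 2" using K that by blast+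
      hence s: "1 / real (Suc j) + 1 / real (Suc k) < e * sqrt ra" by linarith
      have "(1 / real (Suc j) + 1 / real (Suc k))^2 < (e * sqrt ra)^2"
        by (rule power_strict_mono[OF s]) auto
      hence "(1 / real (Suc j) + 1 / real (Suc k))^2 / ra < e^2"
        using rab by (simp add: power_mult_distrib divide_less_eq)
      hence "sqn (\<lambda>\<alpha>. dk j \<alpha> - dk k \<alpha>) < e^2" using dbound[of j k] by linarith
      hence "l2n (\<lambda>\<alpha>. dk j \<alpha> - dk k \<alpha>) < sqrt (e^2)" unfolding l2n_def by (rule real_sqrt_less_mono)
      thus ?thesis using e_pos by simp
    qed
    thus ?thesis by blast
  qed
  obtain b where b: "sqs b" "\<And>\<alpha>. (\<lambda>k. dk k \<alpha>) \<longlonglongrightarrow> b \<alpha>"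
    "\<And>e. e > 0 \<Longrightarrow> \<exists>K. \<forall>k\<ge>K. l2n (\<lambda>\<alpha>. b \<alpha> - dk k \<alpha>) \<le> e"
    using l2_complete[OF ds C] by blast
  have bz: "\<forall>\<alpha>. \<alpha> \<notin> II \<longrightarrow> b \<alpha> = 0"
  proof (intro allI impI)
    fix \<alpha> assume "\<alpha> \<notin> II"
    hence "\<And>k. dk k \<alpha> = 0" using Fk(2,3) by blast
    thus "b \<alpha> = 0" using limit_zero b(2) by metis
  qed
  have hsl: "has_sum_l2 N (\<lambda>\<alpha> g. b \<alpha> * ee \<alpha> g) II x"
    unfolding has_sum_l2_def
  proof (intro conjI allI impI xL)
    fix e :: real assume e: "e > 0"
    obtain k1 where k1: "\<forall>k\<ge>k1. 1 / real (Suc k) < e / 2" using inv_suc_small[of "e/2" 1] e by auto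
    define \<delta> where "\<delta> = e / (2 * (sqrt rb + 1))"
    have "sqrt rb \<ge> 0" using rab by simp
    hence "2 * (sqrt rb + 1) > 0" by (smt (verit))
    hence \<delta>: "\<delta> > 0" unfolding \<delta>_def using e by simp
    have \<delta>2: "sqrt rb * \<delta> < e / 2"
    proof -
      have "sqrt rb * \<delta> < (sqrt rb + 1) * \<delta>" using \<delta> by simp
      also have "\<dots> = e / 2"
      proof -
        have "sqrt rb + 1 \<noteq> 0" using rab by (smt (verit) real_sqrt_ge_zero)
        thus ?thesis unfolding \<delta>_def by (simp add: field_simps)
      qed
      finally show ?thesis .
    qed
    obtain k2 where k2: "\<forall>k\<ge>k2. l2n (\<lambda>\<alpha>. b \<alpha> - dk k \<alpha>) \<le> \<delta>" using b(3)[OF \<delta>] by blast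
    define k where "k = max k1 k2"
    have "1 / real (Suc k) < e / 2" using k1 by (simp add: k_def)
    hence a1: "l2n (\<lambda>g. x g - hk k g) < e / 2"
      using Fk(4)[of k] unfolding hk_def by linarith
    have a2: "l2n (\<lambda>\<alpha>. b \<alpha> - dk k \<alpha>) \<le> \<delta>" using k2 by (simp add: k_def)
    show "\<exists>F0. finite F0 \<and> F0 \<subseteq> II \<and> (\<forall>F. finite F \<and> F0 \<subseteq> F \<and> F \<subseteq> II \<longrightarrow>
        nrm (\<lambda>g. x g - (\<Sum>\<alpha>\<in>F. b \<alpha> * ee \<alpha> g)) < e)"
    proof (intro exI[of _ "Fk k"] conjI allI impI)
      show "finite (Fk k)" "Fk k \<subseteq> II" by (rule Fk(1), rule Fk(2))
      fix F assume F: "finite F \<and> Fk k \<subseteq> F \<and> F \<subseteq> II"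
      have eh: "SF F (dk k) = hk k" unfolding hk_def using F by (intro SF_ext) (auto simp: Fk(3))
      have eq: "(\<lambda>g. x g - (\<Sum>\<alpha>\<in>F. b \<alpha> * ee \<alpha> g)) = (\<lambda>g. (x g - hk k g) + SF F (\<lambda>\<alpha>. dk k \<alpha> - b \<alpha>) g)"
      proof
        fix g
        have "SF F (\<lambda>\<alpha>. dk k \<alpha> - b \<alpha>) g = SF F (dk k) g - SF F b g"
          using fun_cong[OF SF_diff[of F "dk k" b, symmetric], of g] by simp
        hence "SF F (\<lambda>\<alpha>. dk k \<alpha> - b \<alpha>) g = hk k g - SF F b g" using eh by simp
        thus "x g - (\<Sum>\<alpha>\<in>F. b \<alpha> * ee \<alpha> g) = (x g - hk k g) + SF F (\<lambda>\<alpha>. dk k \<alpha> - b \<alpha>) g"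
          by (simp add: SF_def)
      qed
      have sq: "sqs (SF F (\<lambda>\<alpha>. dk k \<alpha> - b \<alpha>))" using F by (intro SF_sqs) auto
      have t1: "l2n (\<lambda>g. (x g - hk k g) + SF F (\<lambda>\<alpha>. dk k \<alpha> - b \<alpha>) g)
          \<le> l2n (\<lambda>g. x g - hk k g) + l2n (SF F (\<lambda>\<alpha>. dk k \<alpha> - b \<alpha>))"
        by (rule l2n_triangle[OF sqs_diff[OF xs hs] sq])
      have t2: "l2n (SF F (\<lambda>\<alpha>. dk k \<alpha> - b \<alpha>)) \<le> sqrt rb * l2n (\<lambda>\<alpha>. dk k \<alpha> - b \<alpha>)"
        using F by (intro SF_up2 sqs_diff ds b(1)) auto
      have t3: "l2n (\<lambda>\<alpha>. dk k \<alpha> - b \<alpha>) = l2n (\<lambda>\<alpha>. b \<alpha> - dk k \<alpha>)" by (rule l2n_diff_comm)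
      have "l2n (\<lambda>g. (x g - hk k g) + SF F (\<lambda>\<alpha>. dk k \<alpha> - b \<alpha>) g)
          \<le> l2n (\<lambda>g. x g - hk k g) + sqrt rb * l2n (\<lambda>\<alpha>. b \<alpha> - dk k \<alpha>)"
        using t1 t2[unfolded t3] by linarith
      moreover have "sqrt rb * l2n (\<lambda>\<alpha>. b \<alpha> - dk k \<alpha>) \<le> sqrt rb * \<delta>"
        using a2 rab by (intro mult_left_mono) auto
      ultimately show "nrm (\<lambda>g. x g - (\<Sum>\<alpha>\<in>F. b \<alpha> * ee \<alpha> g)) < e"
        unfolding eq nrm_eq using a1 \<delta>2 by linarith
    qed
  qed
  show ?thesis using bz b(1) hsl by blast
qed

lemma decomp_uniq:
  assumes b: "\<forall>\<alpha>. \<alpha> \<notin> II \<longrightarrow> b \<alpha> = 0" "has_sum_l2 N (\<lambda>\<alpha> g. b \<alpha> * ee \<alpha> g) II x"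
    and b': "\<forall>\<alpha>. \<alpha> \<notin> II \<longrightarrow> b' \<alpha> = 0" "has_sum_l2 N (\<lambda>\<alpha> g. b' \<alpha> * ee \<alpha> g) II x"
  shows "b = b'"
proof
  fix \<alpha>
  show "b \<alpha> = b' \<alpha>"
  proof (cases "\<alpha> \<in> II")
    case False thus ?thesis using b(1) b'(1) by metis
  next
    case True
    show ?thesis
    proof (rule ccontr)
      assume ne: "b \<alpha> \<noteq> b' \<alpha>"
      define \<delta> where "\<delta> = cmod (b \<alpha> - b' \<alpha>)"
      have \<delta>: "\<delta> > 0" using ne by (simp add: \<delta>_def)
      define e where "e = sqrt ra * \<delta> / 4"
      have e: "e > 0" using \<delta> rab by (simp add: e_def)
      have xL: "x \<in> L2 N" using b(2) by (simp add: has_sum_l2_def)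
      obtain F1 where F1: "finite F1" "F1 \<subseteq> II" "\<forall>F. finite F \<and> F1 \<subseteq> F \<and> F \<subseteq> II \<longrightarrow>
          nrm (\<lambda>g. x g - (\<Sum>\<beta>\<in>F. b \<beta> * ee \<beta> g)) < e"
        using b(2) e unfolding has_sum_l2_def by blast
      obtain F2 where F2: "finite F2" "F2 \<subseteq> II" "\<forall>F. finite F \<and> F2 \<subseteq> F \<and> F \<subseteq> II \<longrightarrow>
          nrm (\<lambda>g. x g - (\<Sum>\<beta>\<in>F. b' \<beta> * ee \<beta> g)) < e"
        using b'(2) e unfolding has_sum_l2_def by blast
      define F where "F = insert \<alpha> (F1 \<union> F2)"
      have fF: "finite F" "F \<subseteq> II" using F1 F2 True by (auto simp: F_def)
      have "F1 \<subseteq> F" "F2 \<subseteq> F" by (auto simp: F_def)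
      hence n1: "l2n (\<lambda>g. x g - SF F b g) < e" and n2: "l2n (\<lambda>g. x g - SF F b' g) < e"
        using F1(3) F2(3) fF unfolding nrm_eq SF_def by blast+
      have xs: "sqs x" using xL by (simp add: L2_iff)
      have "l2n (\<lambda>g. SF F b g - SF F b' g) \<le> l2n (\<lambda>g. SF F b g - x g) + l2n (\<lambda>g. x g - SF F b' g)"
        by (rule l2n_diff_triangle[OF SF_sqs[OF fF] xs SF_sqs[OF fF]])
      also have "\<dots> < 2 * e" using n1 n2 l2n_diff_comm[of "SF F b" x] by simp
      finally have lt: "l2n (SF F (\<lambda>\<beta>. b \<beta> - b' \<beta>)) < 2 * e" unfolding SF_diff .
      have "ra * \<delta>^2 \<le> ra * (\<Sum>\<beta>\<in>F. (cmod (b \<beta> - b' \<beta>))^2)"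
      proof -
        have "\<delta>^2 \<le> (\<Sum>\<beta>\<in>F. (cmod (b \<beta> - b' \<beta>))^2)" unfolding \<delta>_def
          by (rule member_le_sum) (use fF(1) in \<open>auto simp: F_def\<close>)
        thus ?thesis using rab by simp
      qed
      also have "\<dots> \<le> sqn (SF F (\<lambda>\<beta>. b \<beta> - b' \<beta>))" using bnd[OF fF, of "\<lambda>\<beta>. b \<beta> - b' \<beta>"] by blast
      also have "\<dots> = (l2n (SF F (\<lambda>\<beta>. b \<beta> - b' \<beta>)))^2" by (simp add: l2n_sq)
      also have "\<dots> < (2 * e)^2" by (rule power_strict_mono[OF lt l2n_nonneg]) simp
      also have "\<dots> = ra * \<delta>^2 / 4" using rab by (simp add: e_def power_mult_distrib power_divide)
      finally show False using \<delta> rab by simp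
    qed
  qed
qed

end
end

theorem mainTheorem2:
  fixes N :: nat and \<xi> :: "nat \<Rightarrow> vec" and l :: "nat \<Rightarrow> nat" and \<sigma> :: "nat \<Rightarrow> int"
  assumes N: "N \<ge> 1"
    and xi_in: "\<And>i. i \<ge> 1 \<Longrightarrow> \<xi> i \<in> L2 N \<and> (\<forall>g. length g \<noteq> l i \<longrightarrow> \<xi> i g = 0) \<and> nrm (\<xi> i) = 1 \<and> l i \<ge> 1"
    and fin1: "finite {i. i \<ge> 1 \<and> l i = 1}"
    and orth: "\<And>i j x y. i \<ge> 1 \<Longrightarrow> j \<ge> 1 \<Longrightarrow> i \<noteq> j \<Longrightarrow> x \<in> Hmod N (\<xi> i) \<Longrightarrow> y \<in> Hmod N (\<xi> j) \<Longrightarrow> ip x y = 0"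
    and decomp: "ocompl N = cspan N (\<Union>i\<in>{i. i \<ge> 1}. Hmod N (\<xi> i))"
    and onb: "\<And>i. i \<ge> 1 \<Longrightarrow> l i \<ge> 2 \<Longrightarrow>
       orthonormal_basis N (\<lambda>(n::nat, m::nat). xinm N (l i) (\<xi> i) (int n) (int m)) (Hmod N (\<xi> i))"
    and form2: "\<And>i n m. i \<ge> 1 \<Longrightarrow> l i \<ge> 2 \<Longrightarrow>
       bimul N n (\<xi> i) m = (\<lambda>g.
          kp N ((real n + real m) / 2) * xinm N (l i) (\<xi> i) (int n) (int m) g
        - kp N ((real n + real m - 2) / 2) * (xinm N (l i) (\<xi> i) (int n) (int m - 2) g
                                             + xinm N (l i) (\<xi> i) (int n - 2) (int m) g)
        + kp N ((real n + real m - 4) / 2) * xinm N (l i) (\<xi> i) (int n - 2) (int m - 2) g)"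
    and sig: "\<And>i. i \<ge> 1 \<Longrightarrow> l i = 1 \<Longrightarrow> \<sigma> i \<in> {-1, 1}"
    and form1: "\<And>i n m. i \<ge> 1 \<Longrightarrow> l i = 1 \<Longrightarrow>
       bimul N n (\<xi> i) m = (\<lambda>g.
          kp N ((real n + real m) / 2) * xinm N 1 (\<xi> i) (int n) (int m) g
        - kp N ((real n + real m - 2) / 2) * (xinm N 1 (\<xi> i) (int n) (int m - 2) g
                                             + xinm N 1 (\<xi> i) (int n - 2) (int m) g
                                             + of_int (\<sigma> i) * xinm N 1 (\<xi> i) (int n - 1) (int m - 1) g)
        + (\<Sum>k\<in>{2..n + m + 2}. of_int ((- \<sigma> i) ^ k) * kp N ((real n + real m - 2 * real k) / 2) *
             (of_int (\<sigma> i) * xinm N 1 (\<xi> i) (int n - int k - 1) (int m - int k + 1) g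
              + of_int (\<sigma> i) * xinm N 1 (\<xi> i) (int n - int k + 1) (int m - int k - 1) g
              + 2 * xinm N 1 (\<xi> i) (int n - int k) (int m - int k) g)))"
    and T_bdd: "\<exists>B. \<forall>i j F c. i \<ge> 1 \<longrightarrow> j \<ge> 1 \<longrightarrow> finite F \<longrightarrow>
       nrm (\<lambda>g. \<Sum>(n, m)\<in>F. c (n, m) * xinm N (l j) (\<xi> j) (int n) (int m) g)
         \<le> B * nrm (\<lambda>g. \<Sum>(n, m)\<in>F. c (n, m) * xinm N (l i) (\<xi> i) (int n) (int m) g)"
    and S_bdd: "\<exists>B. \<forall>i j F c. i \<ge> 1 \<longrightarrow> j \<ge> 1 \<longrightarrow> finite F \<longrightarrow>
       nrm (\<lambda>g. \<Sum>(n, m)\<in>F. c (n, m) * bimul N n (\<xi> j) m g)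
         \<le> B * nrm (\<lambda>g. \<Sum>(n, m)\<in>F. c (n, m) * bimul N n (\<xi> i) m g)"
  shows "riesz_basis N (\<lambda>(i, n, m). eta N (\<xi> i) n m) {(i, n, m). i \<ge> 1} (ocompl N)
    \<and> (\<forall>x\<in>ocompl N. \<exists>!b. (\<forall>\<alpha>. \<alpha> \<notin> {(i, n, m). i \<ge> 1} \<longrightarrow> b \<alpha> = 0)
         \<and> sq_summable b {(i, n, m). i \<ge> 1}
         \<and> has_sum_l2 N (\<lambda>\<alpha> g. b \<alpha> * (case \<alpha> of (i, n, m) \<Rightarrow> eta N (\<xi> i) n m g))
              {(i, n, m). i \<ge> 1} x)"
proof -
  interpret R: RB N \<xi> l \<sigma>
    by (rule RB.intro) (fact N, erule xi_in, fact fin1, erule (4) orth, fact decomp, erule (1) onb,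
        erule (1) form2, erule (1) form1, fact S_bdd)
  obtain ra rb where rab: "0 < ra" "ra \<le> rb" and bnd0: "\<forall>F c. finite F \<longrightarrow> F \<subseteq> R.II \<longrightarrow>
    ra * (\<Sum>\<alpha>\<in>F. (cmod (c \<alpha>))^2) \<le> sqn (\<lambda>g. \<Sum>\<alpha>\<in>F. c \<alpha> * R.ee \<alpha> g) \<and>
    sqn (\<lambda>g. \<Sum>\<alpha>\<in>F. c \<alpha> * R.ee \<alpha> g) \<le> rb * (\<Sum>\<alpha>\<in>F. (cmod (c \<alpha>))^2)"
    using R.finF_bounds by blast
  have bnd: "\<And>F c. finite F \<Longrightarrow> F \<subseteq> R.II \<Longrightarrow>
      ra * (\<Sum>\<alpha>\<in>F. (cmod (c \<alpha>))^2) \<le> sqn (R.SF F c) \<and> sqn (R.SF F c) \<le> rb * (\<Sum>\<alpha>\<in>F. (cmod (c \<alpha>))^2)"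
    using bnd0 unfolding R.SF_def by blast
  have vee: "(\<lambda>(i, n, m). eta N (\<xi> i) n m) = R.ee" by (rule ext) (simp add: R.ee_def)
  have III: "{(i, n, m). i \<ge> (1::nat)} = R.II" by (simp add: R.II_def)
  have conv: "\<And>b. (\<lambda>\<alpha> g. b \<alpha> * (case \<alpha> of (i, n, m) \<Rightarrow> eta N (\<xi> i) n m g)) = (\<lambda>\<alpha> g. b \<alpha> * R.ee \<alpha> g)"
    by (auto simp: R.ee_def fun_eq_iff split: prod.splits)
  have part1: "riesz_basis N R.ee R.II (ocompl N)"
    unfolding riesz_basis_def
  proof (intro conjI ballI)
    fix \<alpha> assume "\<alpha> \<in> R.II"
    hence "R.ee \<alpha> \<in> lincomb (R.ee ` R.II)" by (intro lincomb_mem) auto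
    thus "R.ee \<alpha> \<in> ocompl N" using lincomb_cspan[OF R.ee_L2] R.cspan_ee by blast
  next
    show "cspan N (R.ee ` R.II) = ocompl N" by (rule R.cspan_ee)
  next
    show "\<exists>a b. 0 < a \<and> a \<le> b \<and> (\<forall>c. sq_summable c R.II \<longrightarrow>
          (\<exists>x. has_sum_l2 N (\<lambda>\<alpha> g. c \<alpha> * R.ee \<alpha> g) R.II x \<and>
               a * infsum (\<lambda>\<alpha>. (cmod (c \<alpha>))^2) R.II \<le> (nrm x)^2 \<and>
               (nrm x)^2 \<le> b * infsum (\<lambda>\<alpha>. (cmod (c \<alpha>))^2) R.II))"
      using R.synth[OF rab bnd] rab unfolding sq_summable_def by blast
  qed
  have part2: "\<forall>x\<in>ocompl N. \<exists>!b. (\<forall>\<alpha>. \<alpha> \<notin> R.II \<longrightarrow> b \<alpha> = 0) \<and> sq_summable b R.II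
         \<and> has_sum_l2 N (\<lambda>\<alpha> g. b \<alpha> * R.ee \<alpha> g) R.II x"
  proof
    fix x assume x: "x \<in> ocompl N"
    obtain b where b: "\<forall>\<alpha>. \<alpha> \<notin> R.II \<longrightarrow> b \<alpha> = 0" "sqs b" "has_sum_l2 N (\<lambda>\<alpha> g. b \<alpha> * R.ee \<alpha> g) R.II x"
      using R.decomp_ex[OF rab bnd x] by blast
    have "sq_summable b R.II" using b(2) unfolding sq_summable_def sqs_def
      by (rule summable_on_subset_banach) simp
    thus "\<exists>!b. (\<forall>\<alpha>. \<alpha> \<notin> R.II \<longrightarrow> b \<alpha> = 0) \<and> sq_summable b R.II
         \<and> has_sum_l2 N (\<lambda>\<alpha> g. b \<alpha> * R.ee \<alpha> g) R.II x"
      using b R.decomp_uniq[OF rab bnd] by (intro ex1I[of _ b]) blast+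
  qed
  show ?thesis unfolding vee III conv using part1 part2 by blast
qed

end
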